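(* Let $(M,\bar g)$ be an $(n+1)$-dimensional umbilically synchronized space-time which is vacuum ($\overline{\mathrm{Ric}}=0$) and geodesic (the acceleration $\mathbf{A}=\bar\nabla_{\mathbf n}\mathbf n$ vanishes). Then $M$ is a Lorentzian cone over a negatively Einstein manifold, i.e. after a suitable choice of the time coordinate the metric takes the form $-dt^2+t^2\gamma_{ij}dx^idx^j$ where $\gamma$ is a time-independent Riemannian metric that is Einstein with negative Einstein constant. If $\dim M=4$, then $M$ represents the expanding hyperbolic model in Minkowski space-time, i.e. $\gamma$ has constant negative curvature and $M$ is (locally) flat Minkowski space-time.
   Context: An umbilically synchronized space-time is an $(n+1)$-dimensional Lorentzian manifold $M$ with coordinates $(t,x^1,\dots,x^n)$ and metric $ds^2=-N^2dt^2+g_{ij}dx^idx^j$ (zero shift), lapse $N>0$, such that each spatial slice $\Sigma_t=\{t=\text{const}\}$ is totally umbilical: $K_{ij}=\bar g(\bar\nabla_{\partial_i}\mathbf n,\partial_j)=\tau g_{ij}$, where $\mathbf n=\frac1N\partial_t$ is the unit normal and $\tau$ the mean curvature. Equivalently $g_{ij}=a^2(t,x^k)\gamma_{ij}$ with $\gamma$ time-independent. The acceleration $\mathbf A=\bar\nabla_{\mathbf n}\mathbf n$ equals the spatial gradient of $\ln N$; the space-time is called geodesic if $\mathbf A=0$.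
   Formalization: The mean curvature $\tau$ must be nonzero at some point of M, so the slices $\Sigma_t$ are not all totally geodesic. The statement above fails without it. *)

theory Defs
  imports "HOL-Analysis.Analysis"
begin

text \<open>A coordinate chart is an open subset of a
real normed vector space 'p together with a coordinate basis E :: 'i \<Rightarrow> 'p indexed by a
finite index type 'i.\<close>

definition partial :: "('i \<Rightarrow> 'p::real_normed_vector) \<Rightarrow> 'i \<Rightarrow> ('p \<Rightarrow> real) \<Rightarrow> 'p \<Rightarrow> real" where
  "partial E m f p = deriv (\<lambda>s. f (p + s *\<^sub>R E m)) 0"

fun iter_partial :: "('i \<Rightarrow> 'p::real_normed_vector) \<Rightarrow> 'i list \<Rightarrow> ('p \<Rightarrow> real) \<Rightarrow> 'p \<Rightarrow> real" where
  "iter_partial E [] f = f"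
| "iter_partial E (m # ms) f = partial E m (iter_partial E ms f)"

definition smooth_on :: "('i \<Rightarrow> 'p::real_normed_vector) \<Rightarrow> 'p set \<Rightarrow> ('p \<Rightarrow> real) \<Rightarrow> bool" where
  "smooth_on E U f \<longleftrightarrow>
     (\<forall>ms. continuous_on U (iter_partial E ms f) \<and>
        (\<forall>m. \<forall>p\<in>U. (\<lambda>s. iter_partial E ms f (p + s *\<^sub>R E m)) differentiable (at 0)))"

definition metric_inv :: "('p \<Rightarrow> 'i::finite \<Rightarrow> 'i \<Rightarrow> real) \<Rightarrow> 'p \<Rightarrow> 'i \<Rightarrow> 'i \<Rightarrow> real" where
  "metric_inv G p a b = matrix_inv (\<chi> x y. G p x y) $ a $ b"

definition christoffel :: "('i::finite \<Rightarrow> 'p::real_normed_vector) \<Rightarrow> ('p \<Rightarrow> 'i \<Rightarrow> 'i \<Rightarrow> real)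
    \<Rightarrow> 'p \<Rightarrow> 'i \<Rightarrow> 'i \<Rightarrow> 'i \<Rightarrow> real" where
  "christoffel E G p l m n = (1/2) * (\<Sum>s\<in>UNIV. metric_inv G p l s *
      (partial E m (\<lambda>q. G q s n) p + partial E n (\<lambda>q. G q s m) p - partial E s (\<lambda>q. G q m n) p))"

definition riemann :: "('i::finite \<Rightarrow> 'p::real_normed_vector) \<Rightarrow> ('p \<Rightarrow> 'i \<Rightarrow> 'i \<Rightarrow> real)
    \<Rightarrow> 'p \<Rightarrow> 'i \<Rightarrow> 'i \<Rightarrow> 'i \<Rightarrow> 'i \<Rightarrow> real" where
  "riemann E G p r s m n =
     partial E m (\<lambda>q. christoffel E G q r n s) p - partial E n (\<lambda>q. christoffel E G q r m s) p
     + (\<Sum>l\<in>UNIV. christoffel E G p r m l * christoffel E G p l n s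
                 - christoffel E G p r n l * christoffel E G p l m s)"

definition riemann_low :: "('i::finite \<Rightarrow> 'p::real_normed_vector) \<Rightarrow> ('p \<Rightarrow> 'i \<Rightarrow> 'i \<Rightarrow> real)
    \<Rightarrow> 'p \<Rightarrow> 'i \<Rightarrow> 'i \<Rightarrow> 'i \<Rightarrow> 'i \<Rightarrow> real" where
  "riemann_low E G p a s m n = (\<Sum>r\<in>UNIV. G p a r * riemann E G p r s m n)"

definition ricci :: "('i::finite \<Rightarrow> 'p::real_normed_vector) \<Rightarrow> ('p \<Rightarrow> 'i \<Rightarrow> 'i \<Rightarrow> real)
    \<Rightarrow> 'p \<Rightarrow> 'i \<Rightarrow> 'i \<Rightarrow> real" where
  "ricci E G p s n = (\<Sum>r\<in>UNIV. riemann E G p r s r n)"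

definition cov_deriv :: "('i::finite \<Rightarrow> 'p::real_normed_vector) \<Rightarrow> ('p \<Rightarrow> 'i \<Rightarrow> 'i \<Rightarrow> real)
    \<Rightarrow> ('p \<Rightarrow> 'i \<Rightarrow> real) \<Rightarrow> 'p \<Rightarrow> 'i \<Rightarrow> 'i \<Rightarrow> real" where
  "cov_deriv E G V p m s = partial E m (\<lambda>q. V q s) p + (\<Sum>l\<in>UNIV. christoffel E G p s m l * V p l)"

definition riemannian_metric_on :: "('j \<Rightarrow> 'p::real_normed_vector) \<Rightarrow> 'p set
    \<Rightarrow> ('p \<Rightarrow> 'i::finite \<Rightarrow> 'i \<Rightarrow> real) \<Rightarrow> bool" where
  "riemannian_metric_on E U G \<longleftrightarrow>
     (\<forall>a b. smooth_on E U (\<lambda>p. G p a b)) \<and>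
     (\<forall>p\<in>U. \<forall>a b. G p a b = G p b a) \<and>
     (\<forall>p\<in>U. \<forall>v::'i \<Rightarrow> real. v \<noteq> (\<lambda>_. 0) \<longrightarrow> (\<Sum>a\<in>UNIV. \<Sum>b\<in>UNIV. G p a b * v a * v b) > 0)"

text \<open>Spacetime points are pairs (t, x) :: real \<times> real^'n; spacetime indices are 'n option,
  None being the time index 0 and Some i the spatial index i.\<close>

definition st_basis :: "'n::finite option \<Rightarrow> real \<times> (real ^ 'n)" where
  "st_basis m = (case m of None \<Rightarrow> (1, 0) | Some i \<Rightarrow> (0, axis i 1))"

definition sp_basis :: "'n::finite \<Rightarrow> real ^ 'n" where
  "sp_basis i = axis i 1"

definition st_metric :: "(real \<times> (real ^ 'n) \<Rightarrow> real) \<Rightarrow> (real \<times> (real ^ 'n) \<Rightarrow> 'n \<Rightarrow> 'n \<Rightarrow> real)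
    \<Rightarrow> real \<times> (real ^ 'n) \<Rightarrow> 'n::finite option \<Rightarrow> 'n option \<Rightarrow> real" where
  "st_metric N g p a b = (case (a, b) of
       (None, None) \<Rightarrow> - (N p)\<^sup>2
     | (Some i, Some j) \<Rightarrow> g p i j
     | _ \<Rightarrow> 0)"

definition unit_normal :: "(real \<times> (real ^ 'n) \<Rightarrow> real) \<Rightarrow> real \<times> (real ^ 'n) \<Rightarrow> 'n::finite option \<Rightarrow> real" where
  "unit_normal N p a = (if a = None then 1 / N p else 0)"

definition second_fund_form :: "(real \<times> (real ^ 'n) \<Rightarrow> real) \<Rightarrow> (real \<times> (real ^ 'n) \<Rightarrow> 'n \<Rightarrow> 'n \<Rightarrow> real)
    \<Rightarrow> real \<times> (real ^ 'n) \<Rightarrow> 'n::finite \<Rightarrow> 'n \<Rightarrow> real" where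
  "second_fund_form N g p i j =
     (\<Sum>s\<in>UNIV. st_metric N g p s (Some j) *
        cov_deriv st_basis (st_metric N g) (unit_normal N) p (Some i) s)"

definition acceleration :: "(real \<times> (real ^ 'n) \<Rightarrow> real) \<Rightarrow> (real \<times> (real ^ 'n) \<Rightarrow> 'n \<Rightarrow> 'n \<Rightarrow> real)
    \<Rightarrow> real \<times> (real ^ 'n) \<Rightarrow> 'n::finite option \<Rightarrow> real" where
  "acceleration N g p s =
     (\<Sum>m\<in>UNIV. unit_normal N p m * cov_deriv st_basis (st_metric N g) (unit_normal N) p m s)"

end

theory Submission
  imports Defs
begin

lemma deriv_cong_nhds:
  assumes "eventually (\<lambda>s. f s = h s) (nhds (0::real))"
  shows "deriv f 0 = deriv h 0"
proof -
  have "\<And>D. DERIV f 0 :> D \<longleftrightarrow> DERIV h 0 :> D"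
    by (rule DERIV_cong_ev) (use assms in auto)
  then show ?thesis unfolding deriv_def by simp
qed

lemma eventually_line_in_open:
  fixes p :: "'p::real_normed_vector"
  assumes "open S" "p \<in> S"
  shows "eventually (\<lambda>s::real. p + s *\<^sub>R v \<in> S) (nhds 0)"
proof -
  have "continuous (at (0::real)) (\<lambda>s. p + s *\<^sub>R v)"
    by (intro continuous_intros)
  then have "((\<lambda>s. p + s *\<^sub>R v) \<longlongrightarrow> p) (nhds (0::real))"
    using tendsto_at_iff_tendsto_nhds[of "\<lambda>s. p + s *\<^sub>R v" 0] by (simp add: isCont_def)
  then show ?thesis using assms topological_tendstoD by fastforce
qed

definition kd :: "'a \<Rightarrow> 'a \<Rightarrow> real" where "kd a b = (if a = b then 1 else 0)"

definition minv :: "('i::finite \<Rightarrow> 'i \<Rightarrow> real) \<Rightarrow> 'i \<Rightarrow> 'i \<Rightarrow> real" where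
  "minv M i j = matrix_inv (\<chi> x y. M x y) $ i $ j"

lemma metric_inv_minv: "metric_inv G p = minv (G p)"
  by (auto simp: metric_inv_def minv_def fun_eq_iff)

lemma minv_unique:
  fixes M B :: "'i::finite \<Rightarrow> 'i \<Rightarrow> real"
  assumes "\<And>i j. (\<Sum>k\<in>UNIV. M i k * B k j) = kd i j"
  shows "minv M i j = B i j"
proof -
  let ?A = "(\<chi> x y. M x y) :: real^'i^'i"
  let ?B = "(\<chi> x y. B x y) :: real^'i^'i"
  have AB: "?A ** ?B = mat 1"
    using assms by (simp add: matrix_matrix_mult_def mat_def vec_eq_iff kd_def)
  then have BA: "?B ** ?A = mat 1" using matrix_left_right_inverse by blast
  have "\<exists>A'. ?A ** A' = mat 1 \<and> A' ** ?A = mat 1" using AB BA by blast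
  then have 1: "?A ** matrix_inv ?A = mat 1 \<and> matrix_inv ?A ** ?A = mat 1"
    unfolding matrix_inv_def by (rule someI_ex)
  have "matrix_inv ?A = matrix_inv ?A ** (?A ** ?B)" using AB by simp
  also have "\<dots> = (matrix_inv ?A ** ?A) ** ?B"
    by (simp add: matrix_mul_assoc)
  also have "\<dots> = ?B" using 1 by simp
  finally show ?thesis by (simp add: minv_def)
qed

lemma posdef_ker:
  fixes M :: "'i::finite \<Rightarrow> 'i \<Rightarrow> real"
  assumes pd: "\<forall>v::'i \<Rightarrow> real. v \<noteq> (\<lambda>_. 0) \<longrightarrow> (\<Sum>a\<in>UNIV. \<Sum>b\<in>UNIV. M a b * v a * v b) > 0"
  shows "\<forall>x. (\<chi> x y. M x y) *v x = 0 \<longrightarrow> x = 0"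
proof (intro allI impI)
  fix x :: "real^'i"
  assume h: "(\<chi> x y. M x y) *v x = 0"
  have row: "\<And>a. (\<Sum>b\<in>UNIV. M a b * x $ b) = 0"
    using h by (simp add: matrix_vector_mult_def vec_eq_iff)
  have "(\<Sum>a\<in>UNIV. \<Sum>b\<in>UNIV. M a b * (\<lambda>i. x$i) a * (\<lambda>i. x$i) b) = (\<Sum>a\<in>UNIV. x$a * (\<Sum>b\<in>UNIV. M a b * x $ b))"
    by (simp add: sum_distrib_left mult_ac)
  also have "\<dots> = 0" by (simp add: row)
  finally have "(\<lambda>i. x$i) = (\<lambda>_. 0)" using pd by force
  then show "x = 0" by (simp add: vec_eq_iff fun_eq_iff)
qed

lemma posdef_inverse:
  fixes M :: "'i::finite \<Rightarrow> 'i \<Rightarrow> real"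
  assumes pd: "\<forall>v::'i \<Rightarrow> real. v \<noteq> (\<lambda>_. 0) \<longrightarrow> (\<Sum>a\<in>UNIV. \<Sum>b\<in>UNIV. M a b * v a * v b) > 0"
  shows "(\<Sum>k\<in>UNIV. M i k * minv M k j) = kd i j" "(\<Sum>k\<in>UNIV. minv M i k * M k j) = kd i j"
proof -
  let ?A = "(\<chi> x y. M x y) :: real^'i^'i"
  obtain B where "B ** ?A = mat 1" using posdef_ker[OF pd] matrix_left_invertible_ker by blast
  then have BA: "B ** ?A = mat 1" and AB: "?A ** B = mat 1" using matrix_left_right_inverse by blast+
  have "\<exists>A'. ?A ** A' = mat 1 \<and> A' ** ?A = mat 1" using AB BA by blast
  then have 1: "?A ** matrix_inv ?A = mat 1 \<and> matrix_inv ?A ** ?A = mat 1"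
    unfolding matrix_inv_def by (rule someI_ex)
  from 1 show "(\<Sum>k\<in>UNIV. M i k * minv M k j) = kd i j" "(\<Sum>k\<in>UNIV. minv M i k * M k j) = kd i j"
    by (auto simp: matrix_matrix_mult_def mat_def vec_eq_iff kd_def minv_def)
qed

lemma posdef_minv_sym:
  fixes M :: "'i::finite \<Rightarrow> 'i \<Rightarrow> real"
  assumes sym: "\<forall>a b. M a b = M b a"
    and pd: "\<forall>v::'i \<Rightarrow> real. v \<noteq> (\<lambda>_. 0) \<longrightarrow> (\<Sum>a\<in>UNIV. \<Sum>b\<in>UNIV. M a b * v a * v b) > 0"
  shows "minv M i j = minv M j i"
proof -
  have "\<And>i j. (\<Sum>k\<in>UNIV. M i k * minv M j k) = kd i j"
  proof -
    fix i j
    have "(\<Sum>k\<in>UNIV. M i k * minv M j k) = (\<Sum>k\<in>UNIV. minv M j k * M k i)"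
      using sym by (simp add: mult.commute)
    also have "\<dots> = kd j i" by (rule posdef_inverse(2)[OF pd])
    finally show "(\<Sum>k\<in>UNIV. M i k * minv M j k) = kd i j" by (simp add: kd_def)
  qed
  from minv_unique[of M "\<lambda>i j. minv M j i", OF this] show ?thesis .
qed

lemma partial_local:
  assumes "open S" "p \<in> S" "\<And>q. q \<in> S \<Longrightarrow> f q = h q"
  shows "partial E m f p = partial E m h p"
  unfolding partial_def
  by (rule deriv_cong_nhds) (use eventually_line_in_open[OF assms(1,2), of "E m"] assms(3) in \<open>auto elim: eventually_mono\<close>)

lemma partial_DERIV:
  assumes "DERIV (\<lambda>s. f (p + s *\<^sub>R E m)) 0 :> D"
  shows "partial E m f p = D"
  using assms unfolding partial_def by (rule DERIV_imp_deriv)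

lemma partial_DERIV_local:
  assumes "open S" "p \<in> S" "\<And>q. q \<in> S \<Longrightarrow> f q = h q"
    and "DERIV (\<lambda>s. h (p + s *\<^sub>R E m)) 0 :> D"
  shows "partial E m f p = D"
  using partial_local[of S p f h E m, OF assms(1-3)] partial_DERIV[where f=h and p=p and E=E and m=m and D=D, OF assms(4)] by simp

lemma partial_const[simp]: "partial E m (\<lambda>q. c) p = 0"
  unfolding partial_def by simp

lemma partial_const_local:
  assumes "open S" "p \<in> S" "\<And>q. q \<in> S \<Longrightarrow> f q = c"
  shows "partial E m f p = 0"
  using partial_local[OF assms(1,2), of f "\<lambda>q. c"] assms(3) by simp

lemma smooth_DERIV:
  assumes "smooth_on E S f" "p \<in> S"
  shows "DERIV (\<lambda>s. iter_partial E ms f (p + s *\<^sub>R E m)) 0 :> iter_partial E (m # ms) f p"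
proof -
  have "(\<lambda>s. iter_partial E ms f (p + s *\<^sub>R E m)) differentiable (at 0)"
    using assms unfolding smooth_on_def by blast
  then have "DERIV (\<lambda>s. iter_partial E ms f (p + s *\<^sub>R E m)) 0 :> deriv (\<lambda>s. iter_partial E ms f (p + s *\<^sub>R E m)) 0"
    using DERIV_deriv_iff_real_differentiable by blast
  then show ?thesis by (simp add: partial_def)
qed

lemma smooth_DERIV0:
  assumes "smooth_on E S f" "p \<in> S"
  shows "DERIV (\<lambda>s. f (p + s *\<^sub>R E m)) 0 :> partial E m f p"
  using smooth_DERIV[OF assms, of "[]" m] by simp

lemma smooth_DERIV1:
  assumes "smooth_on E S f" "p \<in> S"
  shows "DERIV (\<lambda>s. partial E k f (p + s *\<^sub>R E m)) 0 :> partial E m (partial E k f) p"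
  using smooth_DERIV[OF assms, of "[k]" m] by simp

lemma smooth_cont:
  assumes "smooth_on E S f"
  shows "continuous_on S (iter_partial E ms f)"
  using assms unfolding smooth_on_def by blast

lemma st_line_None[simp]: "(t, x) + s *\<^sub>R st_basis None = (t + s, x)"
  by (simp add: st_basis_def)

lemma st_line_Some[simp]: "(t, x) + s *\<^sub>R st_basis (Some i) = (t, x + s *\<^sub>R axis i 1)"
  by (simp add: st_basis_def)

lemma sp_line[simp]: "x + s *\<^sub>R sp_basis i = x + s *\<^sub>R axis i 1"
  by (simp add: sp_basis_def)

lemma sum_option: "(\<Sum>a\<in>(UNIV::'n::finite option set). f a) = f None + (\<Sum>i\<in>UNIV. f (Some i))"
proof -
  have e: "(UNIV::'n option set) = insert None (Some ` UNIV)"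
    by (auto intro: option.exhaust)
  have "sum f (UNIV::'n option set) = sum f (insert None (Some ` UNIV))" by (simp only: e[symmetric])
  also have "\<dots> = f None + sum f (Some ` UNIV)" by (rule sum.insert) auto
  also have "sum f (Some ` UNIV) = (\<Sum>i\<in>UNIV. f (Some i))" by (simp add: sum.reindex inj_on_def)
  finally show ?thesis .
qed

lemma DERIV_time_iff:
  "DERIV (\<lambda>s. f (t + s, x)) 0 :> D \<longleftrightarrow> DERIV (\<lambda>u. f (u, x)) t :> D"
  using DERIV_shift[of "\<lambda>u. f (u, x)" D 0 t] by (simp add: add.commute)

lemma sum_kd1[simp]: fixes i :: "'a::finite" shows "(\<Sum>k\<in>UNIV. kd i k * f k) = f i"
proof -
  have "(\<Sum>k\<in>UNIV. kd i k * f k) = (\<Sum>k\<in>UNIV. if i = k then f k else 0)" by (rule sum.cong) (auto simp: kd_def)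
  then show ?thesis by simp
qed
lemma sum_kd2[simp]: fixes i :: "'a::finite" shows "(\<Sum>k\<in>UNIV. kd k i * f k) = f i"
proof -
  have "(\<Sum>k\<in>UNIV. kd k i * f k) = (\<Sum>k\<in>UNIV. if k = i then f k else 0)" by (rule sum.cong) (auto simp: kd_def)
  then show ?thesis by simp
qed
lemma sum_kd3[simp]: fixes i :: "'a::finite" shows "(\<Sum>k\<in>UNIV. f k * kd i k) = f i"
proof -
  have "(\<Sum>k\<in>UNIV. f k * kd i k) = (\<Sum>k\<in>UNIV. if i = k then f k else 0)" by (rule sum.cong) (auto simp: kd_def)
  then show ?thesis by simp
qed
lemma sum_kd4[simp]: fixes i :: "'a::finite" shows "(\<Sum>k\<in>UNIV. f k * kd k i) = f i"
proof -
  have "(\<Sum>k\<in>UNIV. f k * kd k i) = (\<Sum>k\<in>UNIV. if k = i then f k else 0)" by (rule sum.cong) (auto simp: kd_def)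
  then show ?thesis by simp
qed
lemma kd_sym: "kd i j = kd j i" by (simp add: kd_def)
lemma kd_same[simp]: "kd i i = 1" by (simp add: kd_def)

lemma box_const:
  fixes f :: "real^'n \<Rightarrow> real" and x0 x y :: "real^'n"
  assumes d: "\<And>w i. (\<forall>i. \<bar>w$i - x0$i\<bar> < \<delta>) \<Longrightarrow> DERIV (\<lambda>s. f (w + s *\<^sub>R axis i 1)) 0 :> 0"
    and x: "\<forall>i. \<bar>x$i - x0$i\<bar> < \<delta>" and y: "\<forall>i. \<bar>y$i - x0$i\<bar> < \<delta>"
  shows "f y = f x"
proof -
  define z where "z A = (\<chi> i. if i \<in> A then y$i else x$i)" for A
  have zin: "\<forall>i. \<bar>z A $ i - x0$i\<bar> < \<delta>" for A using x y by (simp add: z_def)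
  have "f (z A) = f x" if "finite A" for A
    using that
  proof (induction A rule: finite_induct)
    case empty
    then show ?case by (simp add: z_def)
  next
    case (insert k A)
    define dd where "dd = y$k - x$k"
    define h where "h s = f (z A + s *\<^sub>R axis k 1)" for s
    have zk: "z A $ k = x $ k" using insert by (simp add: z_def)
    have ins: "z (insert k A) = z A + dd *\<^sub>R axis k 1"
      using insert by (auto simp: z_def vec_eq_iff axis_def dd_def)
    let ?T = "closed_segment 0 dd"
    have "\<exists>c. \<forall>s\<in>?T. h s = c"
    proof (rule has_field_derivative_zero_constant)
      show "convex ?T" by simp
      fix s assume sT: "s \<in> ?T"
      have "\<bar>x$k + s - x0$k\<bar> < \<delta>"
      proof -
        from sT obtain u where u: "0 \<le> u" "u \<le> 1" "s = u * dd"
          by (auto simp: closed_segment_def)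
        have "x$k + s - x0$k = (1 - u) * (x$k - x0$k) + u * (y$k - x0$k)"
          using u by (simp add: dd_def algebra_simps)
        also have "\<bar>\<dots>\<bar> \<le> (1 - u) * \<bar>x$k - x0$k\<bar> + u * \<bar>y$k - x0$k\<bar>"
        proof -
          have "\<bar>(1 - u) * (x$k - x0$k)\<bar> = (1 - u) * \<bar>x$k - x0$k\<bar>" using u by (simp add: abs_mult)
          moreover have "\<bar>u * (y$k - x0$k)\<bar> = u * \<bar>y$k - x0$k\<bar>" using u by (simp add: abs_mult)
          ultimately show ?thesis by (metis abs_triangle_ineq)
        qed
        also have "\<dots> < \<delta>"
        proof -
          have "(1 - u) * \<bar>x$k - x0$k\<bar> \<le> (1 - u) * \<delta>" using u x by (intro mult_left_mono) (auto intro: less_imp_le)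
          moreover have "u * \<bar>y$k - x0$k\<bar> \<le> u * \<delta>" using u y by (intro mult_left_mono) (auto intro: less_imp_le)
          moreover have "\<delta> > 0" using x by (meson abs_ge_zero le_less_trans)
          moreover have "(1 - u) * \<bar>x$k - x0$k\<bar> < (1 - u) * \<delta> \<or> u * \<bar>y$k - x0$k\<bar> < u * \<delta>"
          proof (cases "u = 0")
            case True then show ?thesis using x by simp
          next
            case False then have "u > 0" using u by simp
            then show ?thesis using y mult_strict_left_mono by blast
          qed
          moreover have "(1 - u) * \<delta> + u * \<delta> = \<delta>" by (simp add: algebra_simps)
          ultimately show ?thesis by linarith
        qed
        finally show ?thesis .
      qed
      then have win: "\<forall>i. \<bar>(z A + s *\<^sub>R axis k 1) $ i - x0$i\<bar> < \<delta>"
        using zin[of A] zk by (auto simp: axis_def)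
      have "DERIV (\<lambda>s'. f ((z A + s *\<^sub>R axis k 1) + s' *\<^sub>R axis k 1)) 0 :> 0"
        by (rule d[OF win])
      then have "DERIV (\<lambda>s'. h (s' + s)) 0 :> 0"
        by (simp add: h_def scaleR_add_left algebra_simps)
      then have "DERIV h s :> 0" using DERIV_shift[of h 0 0 s] by simp
      then show "(h has_field_derivative 0) (at s within ?T)"
        by (rule has_field_derivative_at_within)
    qed
    then obtain c where "\<forall>s\<in>?T. h s = c" by blast
    then have "h dd = h 0" by auto
    then show ?case using insert ins by (simp add: h_def)
  qed
  then have "f (z UNIV) = f x" by simp
  moreover have "z UNIV = y" by (simp add: z_def vec_eq_iff)
  ultimately show ?thesis by simp
qed

lemma conn_const:
  fixes f :: "real^'n \<Rightarrow> real"
  assumes U: "open U" "connected U"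
    and d: "\<And>w i. w \<in> U \<Longrightarrow> DERIV (\<lambda>s. f (w + s *\<^sub>R axis i 1)) 0 :> 0"
    and xy: "x \<in> U" "y \<in> U"
  shows "f x = f y"
proof (rule connected_local_const[OF U(2) xy], intro ballI)
  fix a assume a: "a \<in> U"
  obtain r where r: "r > 0" "ball a r \<subseteq> U" using U(1) a open_contains_ball by blast
  define \<delta> where "\<delta> = r / real CARD('n)"
  have \<delta>: "\<delta> > 0" using r by (simp add: \<delta>_def)
  have box: "w \<in> U" if w: "\<forall>i. \<bar>w$i - a$i\<bar> < \<delta>" for w
  proof -
    have "norm (w - a) \<le> (\<Sum>i\<in>UNIV. \<bar>(w - a)$i\<bar>)" by (rule norm_le_l1_cart)
    also have "\<dots> < (\<Sum>i\<in>(UNIV::'n set). \<delta>)"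
      using w by (intro sum_strict_mono) auto
    also have "\<dots> = r" by (simp add: \<delta>_def)
    finally have "dist w a < r" by (simp add: dist_norm)
    then show ?thesis using r by (auto simp: dist_commute)
  qed
  have "\<forall>b\<in>U. b \<noteq> a \<and> dist b a < \<delta> \<longrightarrow> f a = f b"
  proof (intro ballI impI)
    fix b assume b: "b \<in> U" "b \<noteq> a \<and> dist b a < \<delta>"
    have bb: "\<forall>i. \<bar>b$i - a$i\<bar> < \<delta>"
    proof
      fix i show "\<bar>b$i - a$i\<bar> < \<delta>"
        using b component_le_norm_cart[of "b - a" i] by (simp add: dist_norm)
    qed
    have "f b = f a"
    proof (rule box_const[where x0=a and \<delta>=\<delta> and f=f])
      fix w i assume "\<forall>i. \<bar>w$i - a$i\<bar> < \<delta>"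
      then show "DERIV (\<lambda>s. f (w + s *\<^sub>R axis i 1)) 0 :> 0" using box d by blast
    qed (use bb \<delta> in auto)
    then show "f a = f b" by simp
  qed
  then show "eventually (\<lambda>b. f a = f b) (at a within U)"
    unfolding eventually_at using \<delta> by (intro exI[of _ \<delta>] conjI)
qed

lemma sum_swap_mult:
  "(\<Sum>j\<in>B. (\<Sum>i\<in>A. a i * b i j) * c j) = (\<Sum>i\<in>A. a i * (\<Sum>j\<in>B. b i j * c j))"
  for a :: "'i \<Rightarrow> real"
proof -
  have "(\<Sum>j\<in>B. (\<Sum>i\<in>A. a i * b i j) * c j) = (\<Sum>j\<in>B. \<Sum>i\<in>A. a i * b i j * c j)"
    by (simp add: sum_distrib_right)
  also have "\<dots> = (\<Sum>i\<in>A. \<Sum>j\<in>B. a i * b i j * c j)" by (rule sum.swap)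
  also have "\<dots> = (\<Sum>i\<in>A. a i * (\<Sum>j\<in>B. b i j * c j))" by (simp add: sum_distrib_left mult.assoc)
  finally show ?thesis .
qed

lemma kd_mult_left: "kd a b * (x::real) = (if a = b then x else 0)" by (simp add: kd_def)
lemma kd_mult_right: "(x::real) * kd a b = (if a = b then x else 0)" by (simp add: kd_def)
lemma if0_mult_left: "(if P then (x::real) else 0) * y = (if P then x * y else 0)" by simp
lemma if0_mult_right: "(y::real) * (if P then x else 0) = (if P then y * x else 0)" by simp
lemma if0_minus: "- (if P then (x::real) else 0) = (if P then - x else 0)" by simp
lemmas kd_simps = kd_mult_left kd_mult_right if0_mult_left if0_mult_right if0_minus


locale cone_setting =
  fixes I :: "real set" and U :: "(real ^ 'n::finite) set"
    and N :: "real \<times> (real ^ 'n) \<Rightarrow> real"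
    and g :: "real \<times> (real ^ 'n) \<Rightarrow> 'n \<Rightarrow> 'n \<Rightarrow> real"
    and \<tau> :: "real \<times> (real ^ 'n) \<Rightarrow> real"
  assumes dim: "CARD('n) \<ge> 2"
    and I_interval: "is_interval I" and I_open: "open I" and I_ne: "I \<noteq> {}"
    and U_open: "open U" and U_conn: "connected U" and U_ne: "U \<noteq> {}"
    and N_smooth: "smooth_on st_basis (I \<times> U) N"
    and N_pos: "\<forall>p\<in>I \<times> U. N p > 0"
    and g_riem: "riemannian_metric_on st_basis (I \<times> U) g"
    and umbilic: "\<forall>p\<in>I \<times> U. \<forall>i j. second_fund_form N g p i j = \<tau> p * g p i j"
    and not_totally_geodesic: "\<exists>p\<in>I \<times> U. \<tau> p \<noteq> 0"
    and vacuum: "\<forall>p\<in>I \<times> U. \<forall>a b. ricci st_basis (st_metric N g) p a b = 0"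
    and geodesic: "\<forall>p\<in>I \<times> U. \<forall>s. acceleration N g p s = 0"
begin

abbreviation "S \<equiv> I \<times> U"
abbreviation "G \<equiv> st_metric N g"

lemma S_open: "open S" using I_open U_open by (simp add: open_Times)

lemma g_sym: "p \<in> S \<Longrightarrow> g p a b = g p b a"
  using g_riem unfolding riemannian_metric_on_def by blast

lemma g_pd: "p \<in> S \<Longrightarrow> \<forall>v::'n \<Rightarrow> real. v \<noteq> (\<lambda>_. 0) \<longrightarrow> (\<Sum>a\<in>UNIV. \<Sum>b\<in>UNIV. g p a b * v a * v b) > 0"
  using g_riem unfolding riemannian_metric_on_def by blast

lemma g_smooth: "smooth_on st_basis S (\<lambda>p. g p a b)"
  using g_riem unfolding riemannian_metric_on_def by blast

lemma ginv1: "p \<in> S \<Longrightarrow> (\<Sum>k\<in>UNIV. g p i k * minv (g p) k j) = kd i j"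
  using posdef_inverse(1)[OF g_pd] by blast
lemma ginv2: "p \<in> S \<Longrightarrow> (\<Sum>k\<in>UNIV. minv (g p) i k * g p k j) = kd i j"
  using posdef_inverse(2)[OF g_pd] by blast
lemma ginv_sym: "p \<in> S \<Longrightarrow> minv (g p) i j = minv (g p) j i"
  using posdef_minv_sym[of "g p"] g_pd g_sym by blast

lemma g_diag_pos: "p \<in> S \<Longrightarrow> g p i i > 0"
proof -
  assume p: "p \<in> S"
  let ?v = "\<lambda>a. if a = i then 1 else (0::real)"
  have "?v \<noteq> (\<lambda>_. 0)" by (auto simp: fun_eq_iff)
  then have "(\<Sum>a\<in>UNIV. \<Sum>b\<in>UNIV. g p a b * ?v a * ?v b) > 0" using g_pd[OF p] by blast
  moreover have "(\<Sum>a\<in>UNIV. \<Sum>b\<in>UNIV. g p a b * ?v a * ?v b) = g p i i"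
  proof -
    have "\<And>a. (\<Sum>b\<in>UNIV. g p a b * ?v a * ?v b) = (\<Sum>b\<in>UNIV. if b = i then g p a i * ?v a else 0)"
      by (rule sum.cong) auto
    then have "(\<Sum>a\<in>UNIV. \<Sum>b\<in>UNIV. g p a b * ?v a * ?v b) = (\<Sum>a\<in>UNIV. g p a i * ?v a)" by simp
    also have "\<dots> = (\<Sum>a\<in>UNIV. if a = i then g p i i else 0)" by (rule sum.cong) auto
    finally show ?thesis by simp
  qed
  ultimately show ?thesis by simp
qed

lemma Npos: "p \<in> S \<Longrightarrow> N p > 0" using N_pos by blast

definition stinv :: "real \<times> (real ^ 'n) \<Rightarrow> 'n option \<Rightarrow> 'n option \<Rightarrow> real" where
  "stinv p a b = (case (a, b) of (None, None) \<Rightarrow> - 1 / (N p)\<^sup>2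
      | (Some i, Some j) \<Rightarrow> minv (g p) i j | _ \<Rightarrow> 0)"

lemma st_inv: assumes p: "p \<in> S" shows "metric_inv G p a b = stinv p a b"
proof -
  have "minv (G p) a b = stinv p a b"
  proof (rule minv_unique)
    fix a b :: "'n option"
    show "(\<Sum>c\<in>UNIV. G p a c * stinv p c b) = kd a b"
      using Npos[OF p] ginv1[OF p]
      by (cases a; cases b) (auto simp: sum_option st_metric_def stinv_def kd_def)
  qed
  then show ?thesis by (simp add: metric_inv_minv)
qed

lemma st_inv_simps:
  assumes "p \<in> S"
  shows "metric_inv G p None None = - 1 / (N p)\<^sup>2"
    "metric_inv G p None (Some j) = 0" "metric_inv G p (Some j) None = 0"
    "metric_inv G p (Some i) (Some j) = minv (g p) i j"
  using st_inv[OF assms] by (simp_all add: stinv_def)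

lemma G_simps[simp]:
  "G p None None = - (N p)\<^sup>2" "G p None (Some j) = 0" "G p (Some j) None = 0"
  "G p (Some i) (Some j) = g p i j"
  by (simp_all add: st_metric_def)

lemma PG0j[simp]: "partial E m (\<lambda>q. G q None (Some j)) p = 0"
  by simp
lemma PGj0[simp]: "partial E m (\<lambda>q. G q (Some j) None) p = 0"
  by simp
lemma PGij[simp]: "partial E m (\<lambda>q. G q (Some i) (Some j)) p = partial E m (\<lambda>q. g q i j) p"
  by simp
lemma PG00: assumes "p \<in> S"
  shows "partial st_basis m (\<lambda>q. - (N q)\<^sup>2) p = - (2 * N p * partial st_basis m N p)"
proof -
  have "DERIV (\<lambda>s. N (p + s *\<^sub>R st_basis m)) 0 :> partial st_basis m N p"
    by (rule smooth_DERIV0[OF N_smooth assms])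
  then have "DERIV (\<lambda>s. - (N (p + s *\<^sub>R st_basis m))\<^sup>2) 0 :> - (2 * N p * partial st_basis m N p)"
    by (auto intro!: derivative_eq_intros)
  then show ?thesis by (simp add: partial_DERIV)
qed

lemma chr_None: assumes p: "p \<in> S"
  shows "christoffel st_basis G p None m n = - (1 / (2 * (N p)\<^sup>2)) *
     (partial st_basis m (\<lambda>q. G q None n) p + partial st_basis n (\<lambda>q. G q None m) p
      - partial st_basis None (\<lambda>q. G q m n) p)"
  using st_inv[OF p] by (simp add: christoffel_def sum_option stinv_def)

lemma chr_Some: assumes p: "p \<in> S"
  shows "christoffel st_basis G p (Some k) m n = (1/2) * (\<Sum>j\<in>UNIV. minv (g p) k j *
     (partial st_basis m (\<lambda>q. G q (Some j) n) p + partial st_basis n (\<lambda>q. G q (Some j) m) p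
      - partial st_basis (Some j) (\<lambda>q. G q m n) p))"
  using st_inv[OF p] by (simp add: christoffel_def sum_option stinv_def)


abbreviation "\<Gamma> \<equiv> christoffel st_basis G"

lemma G_sym: "p \<in> S \<Longrightarrow> G p a b = G p b a"
  by (cases a; cases b) (auto simp: g_sym)

lemma chr_sym: assumes p: "p \<in> S" shows "\<Gamma> p l m n = \<Gamma> p l n m"
proof -
  have "partial st_basis s (\<lambda>q. G q m n) p = partial st_basis s (\<lambda>q. G q n m) p" for s
    by (rule partial_local[OF S_open p]) (rule G_sym)
  then show ?thesis unfolding christoffel_def by (simp add: algebra_simps)
qed

lemma dN_zero: assumes p: "p \<in> S" shows "partial st_basis (Some k) N p = 0"
proof -
  have chr: "\<Gamma> p (Some i) None None = N p * (\<Sum>j\<in>UNIV. minv (g p) i j * partial st_basis (Some j) N p)" for i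
    using p by (simp add: chr_Some PG00 sum_distrib_left algebra_simps)
  have "acceleration N g p (Some i) = (1 / N p) * (\<Gamma> p (Some i) None None * (1 / N p))" for i
    by (simp add: acceleration_def sum_option unit_normal_def cov_deriv_def)
  then have "(1 / N p) * (\<Gamma> p (Some i) None None * (1 / N p)) = 0" for i
    using geodesic p by simp
  then have A: "(\<Sum>j\<in>UNIV. minv (g p) i j * partial st_basis (Some j) N p) = 0" for i
    using Npos[OF p] chr by simp
  have "partial st_basis (Some k) N p = (\<Sum>j\<in>UNIV. kd k j * partial st_basis (Some j) N p)" by simp
  also have "\<dots> = (\<Sum>j\<in>UNIV. (\<Sum>i\<in>UNIV. g p k i * minv (g p) i j) * partial st_basis (Some j) N p)"
    by (simp add: ginv1[OF p])
  also have "\<dots> = (\<Sum>i\<in>UNIV. g p k i * (\<Sum>j\<in>UNIV. minv (g p) i j * partial st_basis (Some j) N p))"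
    by (rule sum_swap_mult)
  also have "\<dots> = 0" by (simp add: A)
  finally show ?thesis .
qed

lemma N_indep: assumes "t \<in> I" "x \<in> U" "y \<in> U" shows "N (t, x) = N (t, y)"
proof (rule conn_const[OF U_open U_conn _ assms(2,3), of "\<lambda>x. N (t, x)"])
  fix w i assume w: "w \<in> U"
  have "DERIV (\<lambda>s. N ((t, w) + s *\<^sub>R st_basis (Some i))) 0 :> partial st_basis (Some i) N (t, w)"
    by (rule smooth_DERIV0[OF N_smooth]) (use w assms in auto)
  then show "DERIV (\<lambda>s. N (t, w + s *\<^sub>R axis i 1)) 0 :> 0"
    using dN_zero[of "(t, w)" i] w assms by simp
qed

lemma dtg: assumes p: "p \<in> S"
  shows "partial st_basis None (\<lambda>q. g q i j) p = 2 * N p * \<tau> p * g p i j"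
proof -
  have chr: "\<Gamma> p (Some k) (Some i) None = (1/2) * (\<Sum>l\<in>UNIV. minv (g p) k l * partial st_basis None (\<lambda>q. g q l i) p)" for k
    using p by (simp add: chr_Some)
  have "second_fund_form N g p i j = (\<Sum>k\<in>UNIV. g p k j * (\<Gamma> p (Some k) (Some i) None * (1 / N p)))"
    by (simp add: second_fund_form_def sum_option unit_normal_def cov_deriv_def)
  also have "\<dots> = (1 / (2 * N p)) * (\<Sum>k\<in>UNIV. g p j k * (\<Sum>l\<in>UNIV. minv (g p) k l * partial st_basis None (\<lambda>q. g q l i) p))"
    by (simp add: chr sum_distrib_left mult_ac g_sym[OF p, of _ j])
  also have "\<dots> = (1 / (2 * N p)) * (\<Sum>l\<in>UNIV. (\<Sum>k\<in>UNIV. g p j k * minv (g p) k l) * partial st_basis None (\<lambda>q. g q l i) p)"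
    by (simp only: sum_swap_mult)
  also have "\<dots> = (1 / (2 * N p)) * partial st_basis None (\<lambda>q. g q j i) p"
    by (simp add: ginv1[OF p])
  also have "partial st_basis None (\<lambda>q. g q j i) p = partial st_basis None (\<lambda>q. g q i j) p"
    by (rule partial_local[OF S_open p]) (rule g_sym)
  finally have "\<tau> p * g p i j = (1 / (2 * N p)) * partial st_basis None (\<lambda>q. g q i j) p"
    using umbilic p by simp
  then show ?thesis using Npos[OF p] by (simp add: field_simps)
qed


definition "i0 = (undefined :: 'n)"

definition beta :: "real \<times> (real ^ 'n) \<Rightarrow> real" where
  "beta p = partial st_basis None (\<lambda>q. g q i0 i0) p / (2 * g p i0 i0)"

lemma beta_eq: assumes p: "p \<in> S" shows "beta p = N p * \<tau> p"
  using dtg[OF p, of i0 i0] g_diag_pos[OF p, of i0] by (simp add: beta_def)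

lemma dtg': assumes p: "p \<in> S" shows "partial st_basis None (\<lambda>q. g q i j) p = 2 * beta p * g p i j"
  using dtg[OF p] beta_eq[OF p] by simp

definition "dbeta p m = (iter_partial st_basis [m, None] (\<lambda>q. g q i0 i0) p * (2 * g p i0 i0)
    - partial st_basis None (\<lambda>q. g q i0 i0) p * (2 * partial st_basis m (\<lambda>q. g q i0 i0) p)) / (2 * g p i0 i0)\<^sup>2"

lemma beta_DERIV: assumes p: "p \<in> S"
  shows "DERIV (\<lambda>s. beta (p + s *\<^sub>R st_basis m)) 0 :> dbeta p m"
proof -
  have 1: "DERIV (\<lambda>s. iter_partial st_basis [None] (\<lambda>q. g q i0 i0) (p + s *\<^sub>R st_basis m)) 0 :> iter_partial st_basis [m, None] (\<lambda>q. g q i0 i0) p"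
    by (rule smooth_DERIV[OF g_smooth p])
  have 2: "DERIV (\<lambda>s. 2 * g (p + s *\<^sub>R st_basis m) i0 i0) 0 :> 2 * partial st_basis m (\<lambda>q. g q i0 i0) p"
    using DERIV_cmult[OF smooth_DERIV0[OF g_smooth[of i0 i0] p, of m], of 2] by simp
  have ne: "2 * g (p + 0 *\<^sub>R st_basis m) i0 i0 \<noteq> 0" using g_diag_pos[OF p, of i0] by simp
  have 1: "DERIV (\<lambda>s. partial st_basis None (\<lambda>q. g q i0 i0) (p + s *\<^sub>R st_basis m)) 0 :> iter_partial st_basis [m, None] (\<lambda>q. g q i0 i0) p"
    using 1 by (simp only: iter_partial.simps)
  have "DERIV (\<lambda>s. partial st_basis None (\<lambda>q. g q i0 i0) (p + s *\<^sub>R st_basis m) / (2 * g (p + s *\<^sub>R st_basis m) i0 i0)) 0 :>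
     (iter_partial st_basis [m, None] (\<lambda>q. g q i0 i0) p * (2 * g (p + 0 *\<^sub>R st_basis m) i0 i0) - partial st_basis None (\<lambda>q. g q i0 i0) (p + 0 *\<^sub>R st_basis m) * (2 * partial st_basis m (\<lambda>q. g q i0 i0) p)) /
     ((2 * g (p + 0 *\<^sub>R st_basis m) i0 i0) * (2 * g (p + 0 *\<^sub>R st_basis m) i0 i0))"
    by (rule DERIV_divide[OF 1 2 ne])
  then show ?thesis
    by (simp only: beta_def dbeta_def power2_eq_square scale_zero_left add_0_right)
qed

lemma partial_beta: assumes p: "p \<in> S" shows "partial st_basis m beta p = dbeta p m"
  by (rule partial_DERIV[where f=beta and p=p and E=st_basis and m=m, OF beta_DERIV[OF p]])

lemma C000: "p \<in> S \<Longrightarrow> \<Gamma> p None None None = partial st_basis None N p / N p"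
proof -
  assume p: "p \<in> S"
  have "\<Gamma> p None None None = (1 / (2 * (N p)\<^sup>2)) * (2 * N p * partial st_basis None N p)"
    using p by (simp add: chr_None PG00)
  then show ?thesis using Npos[OF p] by (simp add: power2_eq_square field_simps)
qed
lemma C00j: "p \<in> S \<Longrightarrow> \<Gamma> p None None (Some j) = 0"
  by (simp add: chr_None PG00 dN_zero)
lemma C0j0: "p \<in> S \<Longrightarrow> \<Gamma> p None (Some j) None = 0"
  by (simp add: chr_None PG00 dN_zero)
lemma C0ij: "p \<in> S \<Longrightarrow> \<Gamma> p None (Some i) (Some j) = beta p * g p i j / (N p)\<^sup>2"
  using Npos[of p] by (simp add: chr_None dtg' field_simps)
lemma Ck00: "p \<in> S \<Longrightarrow> \<Gamma> p (Some k) None None = 0"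
  by (simp add: chr_Some PG00 dN_zero)
lemma Ck0i: assumes p: "p \<in> S" shows "\<Gamma> p (Some k) None (Some i) = beta p * kd k i"
proof -
  have "\<Gamma> p (Some k) None (Some i) = beta p * (\<Sum>j\<in>UNIV. minv (g p) k j * g p j i)"
    using p by (simp add: chr_Some dtg' sum_distrib_left mult_ac)
  then show ?thesis using ginv2[OF p] by simp
qed
lemma Cki0: assumes p: "p \<in> S" shows "\<Gamma> p (Some k) (Some i) None = beta p * kd k i"
  using Ck0i[OF p, of k i] chr_sym[OF p, of "Some k" "Some i" None] by simp

lemma riem_expand: "riemann st_basis G p r s m n =
   partial st_basis m (\<lambda>q. \<Gamma> q r n s) p - partial st_basis n (\<lambda>q. \<Gamma> q r m s) p
   + (\<Gamma> p r m None * \<Gamma> p None n s - \<Gamma> p r n None * \<Gamma> p None m s)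
   + (\<Sum>k\<in>UNIV. \<Gamma> p r m (Some k) * \<Gamma> p (Some k) n s - \<Gamma> p r n (Some k) * \<Gamma> p (Some k) m s)"
  by (simp add: riemann_def sum_option)


end

lemma card3_univ:
  assumes c: "CARD('n::finite) = 3" and d: "a \<noteq> b" "a \<noteq> c" "b \<noteq> (c::'n)"
  shows "UNIV = {a, b, c}"
proof -
  have "card {a, b, c} = 3" using d by simp
  then show ?thesis using c by (metis card_subset_eq finite subset_UNIV)
qed

lemma card3_third:
  assumes c: "CARD('n::finite) = 3" and d: "a \<noteq> (b::'n)"
  obtains e where "e \<noteq> a" "e \<noteq> b"
proof -
  have "UNIV - {a, b} \<noteq> {}"
  proof
    assume "UNIV - {a, b} = {}"
    then have "UNIV = {a, b}" by auto
    then have "CARD('n) = card {a, b}" by simp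
    also have "\<dots> = 2" using d by simp
    finally show False using c by simp
  qed
  then show ?thesis using that by blast
qed

lemma three_dim_alg:
  fixes V :: "'n::finite \<Rightarrow> 'n \<Rightarrow> 'n \<Rightarrow> 'n \<Rightarrow> real"
  assumes card: "CARD('n) = 3"
    and a1: "\<And>r s m n. V r s m n = - V s r m n"
    and a2: "\<And>r s m n. V r s m n = - V r s n m"
    and tr: "\<And>s n. (\<Sum>r\<in>UNIV. V r s r n) = 0"
  shows "V r s m n = 0"
proof -
  have z1: "V a a m n = 0" for a m n using a1[of a a m n] by simp
  have z2: "V r s a a = 0" for r s a using a2[of r s a a] by simp
  have off: "V p a p b = 0" if "p \<noteq> a" "p \<noteq> b" "a \<noteq> b" for p a b
  proof -
    have U: "UNIV = {p, a, b}" using card3_univ[OF card that] .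
    have "(\<Sum>r\<in>{p, a, b}. V r a r b) = 0" using tr[of a b] U by simp
    then show ?thesis using that by (simp add: z1 z2)
  qed
  have diag: "V a b a b = 0" if ab: "a \<noteq> b" for a b
  proof -
    obtain c where c: "c \<noteq> a" "c \<noteq> b" using card3_third[OF card ab] by blast
    have U: "UNIV = {a, b, c}" using card3_univ[OF card ab c(1)[symmetric] c(2)[symmetric]] .
    have sw: "V x y x y = V y x y x" for x y using a1[of x y x y] a2[of y x x y] by simp
    have "(\<Sum>r\<in>{a, b, c}. V r b r b) = 0" using tr[of b b] U by simp
    then have e1: "V a b a b + V c b c b = 0" using ab c by (simp add: z1 z2)
    have "(\<Sum>r\<in>{a, b, c}. V r a r a) = 0" using tr[of a a] U by simp
    then have e2: "V b a b a + V c a c a = 0" using ab c by (simp add: z1 z2)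
    have "(\<Sum>r\<in>{a, b, c}. V r c r c) = 0" using tr[of c c] U by simp
    then have e3: "V a c a c + V b c b c = 0" using ab c by (simp add: z1 z2)
    show ?thesis using e1 e2 e3 sw[of a b] sw[of c b] sw[of c a] by linarith
  qed
  have key: "V p a p b = 0" if "p \<noteq> a" "p \<noteq> b" for p a b
    using that off diag by (cases "a = b") auto
  show ?thesis
  proof (cases "r = s \<or> m = n")
    case True then show ?thesis using z1 z2 by auto
  next
    case False
    then have rs: "r \<noteq> s" and mn: "m \<noteq> n" by auto
    have "r = m \<or> r = n \<or> s = m \<or> s = n"
    proof (rule ccontr)
      assume "\<not> ?thesis"
      then have "r \<noteq> m" "s \<noteq> m" "r \<noteq> n" "s \<noteq> n" by auto
      then have "UNIV = {r, s, m}" using card3_univ[OF card rs] by simp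
      then have "n \<in> {r, s, m}" by blast
      then show False using \<open>r \<noteq> n\<close> \<open>s \<noteq> n\<close> mn by blast
    qed
    then show ?thesis
    proof (elim disjE)
      assume "r = m" then show ?thesis using key[of r s n] rs mn by simp
    next
      assume "r = n" then show ?thesis using key[of r s m] rs mn a2[of r s m n] by simp
    next
      assume "s = m" then show ?thesis using key[of s r n] rs mn a1[of r s m n] by simp
    next
      assume "s = n" then show ?thesis using key[of s r m] rs mn a1[of r s m n] a2[of s r m n] by simp
    qed
  qed
qed


lemma line_DERIV:
  fixes F :: "'a::real_normed_vector \<Rightarrow> real"
  assumes "\<And>z. z \<in> U \<Longrightarrow> DERIV (\<lambda>s. F (z + s *\<^sub>R v)) 0 :> F' z"
    and "y + u *\<^sub>R v \<in> U"
  shows "DERIV (\<lambda>u. F (y + u *\<^sub>R v)) u :> F' (y + u *\<^sub>R v)"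
proof -
  have "DERIV (\<lambda>s. F ((y + u *\<^sub>R v) + s *\<^sub>R v)) 0 :> F' (y + u *\<^sub>R v)" by (rule assms(1)[OF assms(2)])
  then have "DERIV (\<lambda>s. F (y + (s + u) *\<^sub>R v)) 0 :> F' (y + u *\<^sub>R v)"
    by (simp add: scaleR_add_left algebra_simps)
  then show ?thesis using DERIV_shift[of "\<lambda>w. F (y + w *\<^sub>R v)" _ 0 u] by simp
qed

lemma norm_sp_basis[simp]: "norm (sp_basis i :: real^'n) = 1"
  by (simp add: sp_basis_def)

lemma double_mvt:
  fixes F :: "'a::real_normed_vector \<Rightarrow> real"
  assumes t: "t > 0"
    and inU: "\<And>u v. 0 \<le> u \<Longrightarrow> u \<le> t \<Longrightarrow> 0 \<le> v \<Longrightarrow> v \<le> t \<Longrightarrow> x + u *\<^sub>R a + v *\<^sub>R b \<in> U"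
    and d1: "\<And>z. z \<in> U \<Longrightarrow> DERIV (\<lambda>s. F (z + s *\<^sub>R a)) 0 :> Fa z"
    and d2: "\<And>z. z \<in> U \<Longrightarrow> DERIV (\<lambda>s. Fa (z + s *\<^sub>R b)) 0 :> Fab z"
  shows "\<exists>u v. 0 < u \<and> u < t \<and> 0 < v \<and> v < t \<and>
     F (x + t *\<^sub>R a + t *\<^sub>R b) - F (x + t *\<^sub>R a) - F (x + t *\<^sub>R b) + F x = t * t * Fab (x + u *\<^sub>R a + v *\<^sub>R b)"
proof -
  define A where "A u = F ((x + t *\<^sub>R b) + u *\<^sub>R a) - F (x + u *\<^sub>R a)" for u
  have "\<exists>u. 0 < u \<and> u < t \<and> A t - A 0 = (t - 0) * (Fa ((x + t *\<^sub>R b) + u *\<^sub>R a) - Fa (x + u *\<^sub>R a))"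
  proof (rule MVT2[OF t])
    fix u assume u: "0 \<le> u" "u \<le> t"
    have i1: "(x + t *\<^sub>R b) + u *\<^sub>R a \<in> U" using inU[OF u, of t] t by (simp add: algebra_simps)
    have i2: "x + u *\<^sub>R a \<in> U" using inU[OF u, of 0] t by simp
    show "DERIV A u :> Fa ((x + t *\<^sub>R b) + u *\<^sub>R a) - Fa (x + u *\<^sub>R a)"
      unfolding A_def[abs_def]
      by (intro DERIV_diff line_DERIV[of U F a Fa] d1 i1 i2)
  qed
  then obtain u where u: "0 < u" "u < t" and Au: "A t - A 0 = t * (Fa ((x + t *\<^sub>R b) + u *\<^sub>R a) - Fa (x + u *\<^sub>R a))"
    by auto
  define B where "B v = Fa ((x + u *\<^sub>R a) + v *\<^sub>R b)" for v
  have "\<exists>v. 0 < v \<and> v < t \<and> B t - B 0 = (t - 0) * Fab ((x + u *\<^sub>R a) + v *\<^sub>R b)"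
  proof (rule MVT2[OF t])
    fix v assume v: "0 \<le> v" "v \<le> t"
    have i: "(x + u *\<^sub>R a) + v *\<^sub>R b \<in> U" using inU[of u v] u v by simp
    show "DERIV B v :> Fab ((x + u *\<^sub>R a) + v *\<^sub>R b)"
      unfolding B_def[abs_def] by (rule line_DERIV[of U Fa b Fab, OF d2 i])
  qed
  then obtain v where v: "0 < v" "v < t" and Bv: "B t - B 0 = t * Fab ((x + u *\<^sub>R a) + v *\<^sub>R b)"
    by auto
  have "F (x + t *\<^sub>R a + t *\<^sub>R b) - F (x + t *\<^sub>R a) - F (x + t *\<^sub>R b) + F x = A t - A 0"
    by (simp add: A_def algebra_simps)
  also have "\<dots> = t * (B t - B 0)" using Au by (simp add: B_def algebra_simps)
  also have "\<dots> = t * t * Fab (x + u *\<^sub>R a + v *\<^sub>R b)" using Bv by simp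
  finally show ?thesis using u v by blast
qed

lemma schwarz:
  fixes f :: "real^'n \<Rightarrow> real"
  assumes U: "open U" and x: "x \<in> U" and sm: "smooth_on sp_basis U f"
  shows "partial sp_basis k (partial sp_basis l f) x = partial sp_basis l (partial sp_basis k f) x"
proof (rule ccontr)
  let ?Dkl = "partial sp_basis k (partial sp_basis l f)"
  let ?Dlk = "partial sp_basis l (partial sp_basis k f)"
  assume neq: "?Dkl x \<noteq> ?Dlk x"
  define \<epsilon> where "\<epsilon> = \<bar>?Dkl x - ?Dlk x\<bar> / 4"
  have \<epsilon>: "\<epsilon> > 0" using neq by (simp add: \<epsilon>_def)
  have c1: "continuous_on U ?Dkl" using smooth_cont[OF sm, of "[k, l]"] by simp
  have c2: "continuous_on U ?Dlk" using smooth_cont[OF sm, of "[l, k]"] by simp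
  obtain d1 where d1: "d1 > 0" "\<forall>z\<in>U. dist z x < d1 \<longrightarrow> dist (?Dkl z) (?Dkl x) < \<epsilon>"
    using c1 x \<epsilon> unfolding continuous_on_iff by blast
  obtain d2 where d2: "d2 > 0" "\<forall>z\<in>U. dist z x < d2 \<longrightarrow> dist (?Dlk z) (?Dlk x) < \<epsilon>"
    using c2 x \<epsilon> unfolding continuous_on_iff by blast
  obtain r where r: "r > 0" "ball x r \<subseteq> U" using U x open_contains_ball by blast
  define t where "t = min (min d1 d2) r / 4"
  have t: "t > 0" using d1 d2 r by (simp add: t_def)
  have near: "x + u *\<^sub>R a + v *\<^sub>R b \<in> U \<and> dist (x + u *\<^sub>R a + v *\<^sub>R b) x < min d1 d2"
    if "0 \<le> u" "u \<le> t" "0 \<le> v" "v \<le> t" "norm a = 1" "norm b = 1" for u v and a b :: "real^'n"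
  proof -
    have "dist (x + u *\<^sub>R a + v *\<^sub>R b) x = norm (u *\<^sub>R a + v *\<^sub>R b)" by (simp add: dist_norm)
    also have "\<dots> \<le> norm (u *\<^sub>R a) + norm (v *\<^sub>R b)" by (rule norm_triangle_ineq)
    also have "\<dots> = u + v" using that by simp
    also have "\<dots> < min (min d1 d2) r" using that t unfolding t_def by linarith
    finally have "dist (x + u *\<^sub>R a + v *\<^sub>R b) x < min (min d1 d2) r" .
    then show ?thesis using r by (auto simp: dist_commute)
  qed
  have D0: "\<And>z m. z \<in> U \<Longrightarrow> DERIV (\<lambda>s. f (z + s *\<^sub>R sp_basis m)) 0 :> partial sp_basis m f z"
    by (rule smooth_DERIV0[OF sm])
  have D1: "\<And>z m j. z \<in> U \<Longrightarrow> DERIV (\<lambda>s. partial sp_basis j f (z + s *\<^sub>R sp_basis m)) 0 :> partial sp_basis m (partial sp_basis j f) z"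
    by (rule smooth_DERIV1[OF sm])
  obtain u v where uv: "0 < u" "u < t" "0 < v" "v < t" and
    e1: "f (x + t *\<^sub>R sp_basis k + t *\<^sub>R sp_basis l) - f (x + t *\<^sub>R sp_basis k) - f (x + t *\<^sub>R sp_basis l) + f x
        = t * t * ?Dlk (x + u *\<^sub>R sp_basis k + v *\<^sub>R sp_basis l)"
    using double_mvt[OF t, of x "sp_basis k" "sp_basis l" U f "partial sp_basis k f" ?Dlk] near D0 D1 by auto
  obtain u' v' where uv': "0 < u'" "u' < t" "0 < v'" "v' < t" and
    e2: "f (x + t *\<^sub>R sp_basis l + t *\<^sub>R sp_basis k) - f (x + t *\<^sub>R sp_basis l) - f (x + t *\<^sub>R sp_basis k) + f x
        = t * t * ?Dkl (x + u' *\<^sub>R sp_basis l + v' *\<^sub>R sp_basis k)"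
    using double_mvt[OF t, of x "sp_basis l" "sp_basis k" U f "partial sp_basis l f" ?Dkl] near D0 D1 by auto
  have "x + t *\<^sub>R sp_basis l + t *\<^sub>R sp_basis k = x + t *\<^sub>R sp_basis k + t *\<^sub>R sp_basis l" by (simp only: ac_simps)
  then have eq: "?Dlk (x + u *\<^sub>R sp_basis k + v *\<^sub>R sp_basis l) = ?Dkl (x + u' *\<^sub>R sp_basis l + v' *\<^sub>R sp_basis k)"
    using e1 e2 t by (simp add: algebra_simps)
  have n1: "dist (?Dlk (x + u *\<^sub>R sp_basis k + v *\<^sub>R sp_basis l)) (?Dlk x) < \<epsilon>"
    using d2 near[of u v "sp_basis k" "sp_basis l"] uv by auto
  have n2: "dist (?Dkl (x + u' *\<^sub>R sp_basis l + v' *\<^sub>R sp_basis k)) (?Dkl x) < \<epsilon>"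
    using d1 near[of u' v' "sp_basis l" "sp_basis k"] uv' by auto
  have "\<bar>?Dkl x - ?Dlk x\<bar> < 2 * \<epsilon>" using n1 n2 eq by (simp add: dist_real_def)
  then show False using \<epsilon> by (simp add: \<epsilon>_def)
qed


lemma posdef_det:
  fixes M :: "'i::finite \<Rightarrow> 'i \<Rightarrow> real"
  assumes pd: "\<forall>v::'i \<Rightarrow> real. v \<noteq> (\<lambda>_. 0) \<longrightarrow> (\<Sum>a\<in>UNIV. \<Sum>b\<in>UNIV. M a b * v a * v b) > 0"
  shows "det ((\<chi> x y. M x y) :: real^'i^'i) \<noteq> 0"
proof -
  let ?A = "(\<chi> x y. M x y) :: real^'i^'i"
  obtain B where "B ** ?A = mat 1" using posdef_ker[OF pd] matrix_left_invertible_ker by blast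
  then have BA: "B ** ?A = mat 1" and AB: "?A ** B = mat 1" using matrix_left_right_inverse by blast+
  then have "invertible ?A" unfolding invertible_def by blast
  then show ?thesis using invertible_det_nz by blast
qed

lemma minv_cramer:
  fixes M :: "'i::finite \<Rightarrow> 'i \<Rightarrow> real"
  assumes d: "det ((\<chi> a b. M a b) :: real^'i^'i) \<noteq> 0"
  shows "minv M i j = det ((\<chi> a b. if b = i then kd a j else M a b) :: real^'i^'i) / det ((\<chi> a b. M a b) :: real^'i^'i)"
proof -
  let ?A = "(\<chi> a b. M a b) :: real^'i^'i"
  have "invertible ?A" using d invertible_det_nz by blast
  then have "\<exists>A'. ?A ** A' = mat 1 \<and> A' ** ?A = mat 1" unfolding invertible_def by blast
  then have 1: "?A ** matrix_inv ?A = mat 1 \<and> matrix_inv ?A ** ?A = mat 1"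
    unfolding matrix_inv_def by (rule someI_ex)
  define x where "x = (\<chi> k. matrix_inv ?A $ k $ j)"
  have "?A *v x = (\<chi> a. kd a j)"
  proof -
    have "(?A *v x) $ a = (?A ** matrix_inv ?A) $ a $ j" for a
      by (simp add: x_def matrix_vector_mult_def matrix_matrix_mult_def)
    then show ?thesis using 1 by (simp add: vec_eq_iff mat_def kd_def)
  qed
  then have "x = (\<chi> k. det ((\<chi> a b. if b = k then (\<chi> a. kd a j) $ a else ?A $ a $ b) :: real^'i^'i) / det ?A)"
    using cramer[OF d] by blast
  moreover have "((\<chi> a b. if b = i then (\<chi> a. kd a j) $ a else ?A $ a $ b) :: real^'i^'i) = (\<chi> a b. if b = i then kd a j else M a b)"
    by (simp add: vec_eq_iff)
  ultimately have "x $ i = det ((\<chi> a b. if b = i then kd a j else M a b) :: real^'i^'i) / det ?A"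
    by simp
  then show ?thesis by (simp add: x_def minv_def)
qed

lemma differentiable_prod':
  fixes f :: "'i \<Rightarrow> real \<Rightarrow> real"
  assumes "finite I" "\<forall>i\<in>I. f i differentiable (at x within S)"
  shows "(\<lambda>x. \<Prod>i\<in>I. f i x) differentiable (at x within S)"
  using assms
proof (induction I rule: finite_induct)
  case empty then show ?case by simp
next
  case (insert i I)
  then show ?case by (auto intro!: differentiable_mult)
qed

lemma det_differentiable:
  fixes F :: "real \<Rightarrow> 'i::finite \<Rightarrow> 'i \<Rightarrow> real"
  assumes "\<And>a b. (\<lambda>s. F s a b) differentiable (at 0)"
  shows "(\<lambda>s. det ((\<chi> a b. F s a b) :: real^'i^'i)) differentiable (at 0)"
proof -
  have "(\<lambda>s. \<Sum>p\<in>{p. p permutes (UNIV::'i set)}. of_int (sign p) * (\<Prod>i\<in>UNIV. F s i (p i))) differentiable (at 0)"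
    by (intro differentiable_sum ballI differentiable_mult differentiable_const differentiable_prod')
       (auto simp: finite_permutations assms)
  then show ?thesis by (simp add: det_def)
qed

lemma minv_differentiable:
  fixes M :: "real \<Rightarrow> 'i::finite \<Rightarrow> 'i \<Rightarrow> real"
  assumes d: "\<And>a b. (\<lambda>s. M s a b) differentiable (at 0)"
    and nz: "eventually (\<lambda>s. det ((\<chi> a b. M s a b) :: real^'i^'i) \<noteq> 0) (nhds 0)"
  shows "(\<lambda>s. minv (M s) i j) differentiable (at 0)"
proof -
  define h where "h s = det ((\<chi> a b. if b = i then kd a j else M s a b) :: real^'i^'i) / det ((\<chi> a b. M s a b) :: real^'i^'i)" for s
  have "h differentiable (at 0)"
    unfolding h_def
  proof (intro differentiable_divide det_differentiable)
    show "(\<lambda>s. if b = i then kd a j else M s a b) differentiable (at 0)" for a b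
      using d by (cases "b = i") auto
    show "(\<lambda>s. M s a b) differentiable (at 0)" for a b by (rule d)
    show "det ((\<chi> a b. M 0 a b) :: real^'i^'i) \<noteq> 0" using eventually_nhds_x_imp_x[OF nz] .
  qed
  then obtain D where D: "DERIV h 0 :> D" by (auto simp: real_differentiable_def)
  have ev: "eventually (\<lambda>s. minv (M s) i j = h s) (nhds 0)"
    by (rule eventually_mono[OF nz]) (simp add: minv_cramer h_def)
  have "DERIV (\<lambda>s. minv (M s) i j) 0 :> D"
    by (rule iffD2[OF DERIV_cong_ev[OF refl ev refl] D])
  then show ?thesis by (auto simp: real_differentiable_def)
qed


locale sp_metric =
  fixes U :: "(real ^ 'n::finite) set" and \<gamma> :: "real ^ 'n \<Rightarrow> 'n \<Rightarrow> 'n \<Rightarrow> real"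
  assumes U_open: "open U" and riem: "riemannian_metric_on sp_basis U \<gamma>"
begin

definition "P k a b y = partial sp_basis k (\<lambda>x. \<gamma> x a b) y"
definition "P2 m k a b y = partial sp_basis m (\<lambda>x. P k a b x) y"
abbreviation "Gs \<equiv> christoffel sp_basis \<gamma>"
definition "G1 y a m n = (\<Sum>r\<in>UNIV. \<gamma> y a r * Gs y r m n)"

lemma sm: "smooth_on sp_basis U (\<lambda>x. \<gamma> x a b)" using riem unfolding riemannian_metric_on_def by blast
lemma sym: "y \<in> U \<Longrightarrow> \<gamma> y a b = \<gamma> y b a" using riem unfolding riemannian_metric_on_def by blast
lemma pd: "y \<in> U \<Longrightarrow> \<forall>v::'n \<Rightarrow> real. v \<noteq> (\<lambda>_. 0) \<longrightarrow> (\<Sum>a\<in>UNIV. \<Sum>b\<in>UNIV. \<gamma> y a b * v a * v b) > 0"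
  using riem unfolding riemannian_metric_on_def by blast
lemma inv1: "y \<in> U \<Longrightarrow> (\<Sum>k\<in>UNIV. \<gamma> y i k * minv (\<gamma> y) k j) = kd i j"
  using posdef_inverse(1)[OF pd] by blast
lemma inv2: "y \<in> U \<Longrightarrow> (\<Sum>k\<in>UNIV. minv (\<gamma> y) i k * \<gamma> y k j) = kd i j"
  using posdef_inverse(2)[OF pd] by blast
lemma inv_sym: "y \<in> U \<Longrightarrow> minv (\<gamma> y) i j = minv (\<gamma> y) j i"
  using posdef_minv_sym[of "\<gamma> y"] pd sym by blast

lemma Psym: "y \<in> U \<Longrightarrow> P k a b y = P k b a y"
  unfolding P_def by (rule partial_local[OF U_open]) (auto intro: sym)
lemma P2sym: "y \<in> U \<Longrightarrow> P2 m k a b y = P2 m k b a y"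
  unfolding P2_def by (rule partial_local[OF U_open]) (auto intro: Psym)
lemma P2schwarz: "y \<in> U \<Longrightarrow> P2 m k a b y = P2 k m a b y"
proof -
  assume y: "y \<in> U"
  have e: "(\<lambda>x. P k a b x) = partial sp_basis k (\<lambda>x. \<gamma> x a b)" "(\<lambda>x. P m a b x) = partial sp_basis m (\<lambda>x. \<gamma> x a b)"
    by (auto simp: P_def fun_eq_iff)
  show ?thesis unfolding P2_def e by (rule schwarz[OF U_open y sm])
qed

lemma dP: "y \<in> U \<Longrightarrow> DERIV (\<lambda>s. P k a b (y + s *\<^sub>R sp_basis m)) 0 :> P2 m k a b y"
  using smooth_DERIV1[OF sm[of a b], of y k m] by (simp add: P_def P2_def)
lemma dg: "y \<in> U \<Longrightarrow> DERIV (\<lambda>s. \<gamma> (y + s *\<^sub>R sp_basis m) a b) 0 :> P m a b y"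
  using smooth_DERIV0[OF sm, of y m] by (simp add: P_def)

lemma Gs_def': "Gs y r m n = (1/2) * (\<Sum>s\<in>UNIV. minv (\<gamma> y) r s * (P m s n y + P n s m y - P s m n y))"
  by (simp add: christoffel_def metric_inv_minv P_def)

lemma Gs_sym: "y \<in> U \<Longrightarrow> Gs y r m n = Gs y r n m"
  unfolding Gs_def' using Psym[of y _ m n] by (simp add: algebra_simps)

lemma G1_eq: assumes y: "y \<in> U" shows "G1 y a m n = (1/2) * (P m a n y + P n a m y - P a m n y)"
proof -
  have "G1 y a m n = (1/2) * (\<Sum>s\<in>UNIV. (\<Sum>r\<in>UNIV. \<gamma> y a r * minv (\<gamma> y) r s) * (P m s n y + P n s m y - P s m n y))"
    unfolding G1_def Gs_def' by (simp add: sum_swap_mult sum_distrib_left mult_ac)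
  also have "\<dots> = (1/2) * (P m a n y + P n a m y - P a m n y)" by (simp add: inv1[OF y])
  finally show ?thesis .
qed

lemma G1_sym: assumes y: "y \<in> U" shows "G1 y a m n = G1 y a n m"
  using G1_eq[OF y, of a m n] G1_eq[OF y, of a n m] Psym[OF y, of a m n] by simp

lemma Gs_inv: assumes y: "y \<in> U" shows "Gs y r m n = (\<Sum>b\<in>UNIV. minv (\<gamma> y) r b * G1 y b m n)"
proof -
  have "(\<Sum>b\<in>UNIV. minv (\<gamma> y) r b * G1 y b m n) = (\<Sum>c\<in>UNIV. (\<Sum>b\<in>UNIV. minv (\<gamma> y) r b * \<gamma> y b c) * Gs y c m n)"
    unfolding G1_def by (rule sum_swap_mult[symmetric])
  also have "\<dots> = Gs y r m n" by (simp add: inv2[OF y])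
  finally show ?thesis by simp
qed

lemma compat: assumes y: "y \<in> U" shows "P m a r y = G1 y a m r + G1 y r m a"
  using G1_eq[OF y, of a m r] G1_eq[OF y, of r m a] Psym[OF y, of a r m] Psym[OF y, of m a r] Psym[OF y, of r a m]
  by (simp add: algebra_simps)

lemma Gs_diff: assumes y: "y \<in> U"
  shows "(\<lambda>s. Gs (y + s *\<^sub>R sp_basis m) r n k) differentiable (at 0)"
proof -
  have ev: "eventually (\<lambda>s. y + s *\<^sub>R sp_basis m \<in> U) (nhds 0)"
    by (rule eventually_line_in_open[OF U_open y])
  have mi: "(\<lambda>s. minv (\<gamma> (y + s *\<^sub>R sp_basis m)) r j) differentiable (at 0)" for j
  proof (rule minv_differentiable)
    show "(\<lambda>s. \<gamma> (y + s *\<^sub>R sp_basis m) a b) differentiable (at 0)" for a b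
      using dg[OF y] by (auto simp: real_differentiable_def)
    show "eventually (\<lambda>s. det ((\<chi> a b. \<gamma> (y + s *\<^sub>R sp_basis m) a b) :: real^'n^'n) \<noteq> 0) (nhds 0)"
      by (rule eventually_mono[OF ev]) (rule posdef_det[OF pd])
  qed
  have pp: "(\<lambda>s. P i a b (y + s *\<^sub>R sp_basis m)) differentiable (at 0)" for i a b
    using dP[OF y, where k=i and a=a and b=b and m=m] unfolding real_differentiable_def by blast
  show ?thesis
    unfolding Gs_def'
    by (intro differentiable_mult differentiable_const differentiable_sum ballI differentiable_diff
        differentiable_add mi pp) auto
qed

lemma Gs_DERIV: assumes y: "y \<in> U"
  shows "DERIV (\<lambda>s. Gs (y + s *\<^sub>R sp_basis m) r n k) 0 :> partial sp_basis m (\<lambda>z. Gs z r n k) y"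
  using Gs_diff[OF y] DERIV_deriv_iff_real_differentiable unfolding partial_def by blast

lemma dG1_prod: assumes y: "y \<in> U"
  shows "partial sp_basis m (\<lambda>z. G1 z a n k) y
     = (\<Sum>r\<in>UNIV. P m a r y * Gs y r n k + \<gamma> y a r * partial sp_basis m (\<lambda>z. Gs z r n k) y)"
proof (rule partial_DERIV)
  show "DERIV (\<lambda>s. G1 (y + s *\<^sub>R sp_basis m) a n k) 0 :>
      (\<Sum>r\<in>UNIV. P m a r y * Gs y r n k + \<gamma> y a r * partial sp_basis m (\<lambda>z. Gs z r n k) y)"
    unfolding G1_def
  proof (rule DERIV_sum)
    fix r
    show "DERIV (\<lambda>s. \<gamma> (y + s *\<^sub>R sp_basis m) a r * Gs (y + s *\<^sub>R sp_basis m) r n k) 0 :>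
        P m a r y * Gs y r n k + \<gamma> y a r * partial sp_basis m (\<lambda>z. Gs z r n k) y"
      using DERIV_mult[OF dg[OF y, where m=m and a=a and b=r] Gs_DERIV[OF y, where m=m and r=r and n=n and k=k]]
      by (simp add: mult.commute)
  qed
qed

lemma dG1_closed: assumes y: "y \<in> U"
  shows "partial sp_basis m (\<lambda>z. G1 z a n k) y = (1/2) * (P2 m n a k y + P2 m k a n y - P2 m a n k y)"
proof (rule partial_DERIV_local[OF U_open y])
  show "\<And>q. q \<in> U \<Longrightarrow> G1 q a n k = (1/2) * (P n a k q + P k a n q - P a n k q)" by (rule G1_eq)
  show "DERIV (\<lambda>s. (1/2) * (P n a k (y + s *\<^sub>R sp_basis m) + P k a n (y + s *\<^sub>R sp_basis m) - P a n k (y + s *\<^sub>R sp_basis m))) 0 :>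
      (1/2) * (P2 m n a k y + P2 m k a n y - P2 m a n k y)"
    by (intro DERIV_cmult DERIV_add DERIV_diff dP[OF y])
qed


definition "Q y a s m n = (\<Sum>r\<in>UNIV. G1 y r m a * Gs y r n s)"

lemma Qswap: assumes y: "y \<in> U" shows "Q y a s m n = Q y s a n m"
proof -
  have S: "(\<Sum>r\<in>UNIV. X r * (\<Sum>b\<in>UNIV. minv (\<gamma> y) r b * Y b)) = (\<Sum>r\<in>UNIV. Y r * (\<Sum>b\<in>UNIV. minv (\<gamma> y) r b * X b))"
    for X Y :: "'n \<Rightarrow> real"
  proof -
    have "(\<Sum>r\<in>UNIV. X r * (\<Sum>b\<in>UNIV. minv (\<gamma> y) r b * Y b)) = (\<Sum>r\<in>UNIV. \<Sum>b\<in>UNIV. X r * minv (\<gamma> y) r b * Y b)"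
      by (simp add: sum_distrib_left mult.assoc)
    also have "\<dots> = (\<Sum>b\<in>UNIV. \<Sum>r\<in>UNIV. X r * minv (\<gamma> y) r b * Y b)" by (rule sum.swap)
    also have "\<dots> = (\<Sum>b\<in>UNIV. Y b * (\<Sum>r\<in>UNIV. minv (\<gamma> y) b r * X r))"
      by (simp add: sum_distrib_left mult_ac inv_sym[OF y])
    finally show ?thesis .
  qed
  show ?thesis unfolding Q_def Gs_inv[OF y] by (rule S)
qed

lemma riemann_low_expand: assumes y: "y \<in> U"
  shows "riemann_low sp_basis \<gamma> y a s m n =
    partial sp_basis m (\<lambda>z. G1 z a n s) y - partial sp_basis n (\<lambda>z. G1 z a m s) y - Q y a s m n + Q y a s n m"
proof -
  have l: "(\<Sum>r\<in>UNIV. \<gamma> y a r * (\<Sum>l\<in>UNIV. Gs y r m l * Gs y l n s - Gs y r n l * Gs y l m s))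
      = (\<Sum>l\<in>UNIV. G1 y a m l * Gs y l n s) - (\<Sum>l\<in>UNIV. G1 y a n l * Gs y l m s)"
  proof -
    have "(\<Sum>r\<in>UNIV. \<gamma> y a r * (\<Sum>l\<in>UNIV. Gs y r m l * Gs y l n s - Gs y r n l * Gs y l m s))
       = (\<Sum>r\<in>UNIV. \<gamma> y a r * (\<Sum>l\<in>UNIV. Gs y r m l * Gs y l n s)) - (\<Sum>r\<in>UNIV. \<gamma> y a r * (\<Sum>l\<in>UNIV. Gs y r n l * Gs y l m s))"
      by (simp add: sum_subtractf right_diff_distrib)
    also have "\<dots> = (\<Sum>l\<in>UNIV. G1 y a m l * Gs y l n s) - (\<Sum>l\<in>UNIV. G1 y a n l * Gs y l m s)"
      unfolding G1_def by (simp only: sum_swap_mult)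
    finally show ?thesis .
  qed
  have p: "(\<Sum>r\<in>UNIV. \<gamma> y a r * partial sp_basis m (\<lambda>z. Gs z r n s) y)
      = partial sp_basis m (\<lambda>z. G1 z a n s) y - (\<Sum>r\<in>UNIV. G1 y a m r * Gs y r n s) - Q y a s m n" for m n
    unfolding dG1_prod[OF y] Q_def compat[OF y] by (simp add: sum.distrib algebra_simps)
  have "riemann_low sp_basis \<gamma> y a s m n = (\<Sum>r\<in>UNIV. \<gamma> y a r * partial sp_basis m (\<lambda>z. Gs z r n s) y)
     - (\<Sum>r\<in>UNIV. \<gamma> y a r * partial sp_basis n (\<lambda>z. Gs z r m s) y)
     + (\<Sum>r\<in>UNIV. \<gamma> y a r * (\<Sum>l\<in>UNIV. Gs y r m l * Gs y l n s - Gs y r n l * Gs y l m s))"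
    unfolding riemann_low_def riemann_def by (simp add: sum.distrib sum_subtractf algebra_simps)
  also have "\<dots> = partial sp_basis m (\<lambda>z. G1 z a n s) y - partial sp_basis n (\<lambda>z. G1 z a m s) y - Q y a s m n + Q y a s n m"
    unfolding l p by simp
  finally show ?thesis .
qed

lemma riemann_low_antisym: assumes y: "y \<in> U"
  shows "riemann_low sp_basis \<gamma> y a s m n = - riemann_low sp_basis \<gamma> y s a m n"
proof -
  have "riemann_low sp_basis \<gamma> y a s m n + riemann_low sp_basis \<gamma> y s a m n = 0"
    unfolding riemann_low_expand[OF y] dG1_closed[OF y] Qswap[OF y, of s a m n] Qswap[OF y, of s a n m]
    using P2sym[OF y, of m s a n] P2sym[OF y, of m a n s] P2sym[OF y, of n s a m] P2sym[OF y, of n a m s]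
      P2schwarz[OF y, of m n a s] P2schwarz[OF y, of m n s a]
    by (simp add: algebra_simps)
  then show ?thesis by simp
qed


lemma riemann_antisym_mn: "riemann E G p r s m n = - riemann E G p r s n m"
  by (simp add: riemann_def algebra_simps sum_subtractf)

lemma upper_from_low: assumes y: "y \<in> U"
  shows "riemann sp_basis \<gamma> y r b m n = (\<Sum>a\<in>UNIV. minv (\<gamma> y) r a * riemann_low sp_basis \<gamma> y a b m n)"
proof -
  have "(\<Sum>a\<in>UNIV. minv (\<gamma> y) r a * riemann_low sp_basis \<gamma> y a b m n)
     = (\<Sum>c\<in>UNIV. (\<Sum>a\<in>UNIV. minv (\<gamma> y) r a * \<gamma> y a c) * riemann sp_basis \<gamma> y c b m n)"
    unfolding riemann_low_def by (rule sum_swap_mult[symmetric])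
  also have "\<dots> = riemann sp_basis \<gamma> y r b m n" by (simp add: inv2[OF y])
  finally show ?thesis by simp
qed

lemma einstein_3d:
  assumes card: "CARD('n) = 3"
    and ein: "\<And>i j. ricci sp_basis \<gamma> y i j = c * \<gamma> y i j"
    and y: "y \<in> U"
  shows "riemann_low sp_basis \<gamma> y i j k l = (c / 2) * (\<gamma> y i k * \<gamma> y j l - \<gamma> y i l * \<gamma> y j k)"
proof -
  define K where "K = c / 2"
  define W where "W r s m n = (\<Sum>b\<in>UNIV. minv (\<gamma> y) s b * riemann sp_basis \<gamma> y r b m n)" for r s m n
  define V where "V r s m n = W r s m n - K * (kd r m * kd s n - kd r n * kd s m)" for r s m n
  have W2: "W r s m n = (\<Sum>a\<in>UNIV. \<Sum>b\<in>UNIV. minv (\<gamma> y) r a * minv (\<gamma> y) s b * riemann_low sp_basis \<gamma> y a b m n)" for r s m n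
  proof -
    have "W r s m n = (\<Sum>b\<in>UNIV. \<Sum>a\<in>UNIV. minv (\<gamma> y) s b * (minv (\<gamma> y) r a * riemann_low sp_basis \<gamma> y a b m n))"
      unfolding W_def upper_from_low[OF y] by (simp add: sum_distrib_left)
    also have "\<dots> = (\<Sum>a\<in>UNIV. \<Sum>b\<in>UNIV. minv (\<gamma> y) s b * (minv (\<gamma> y) r a * riemann_low sp_basis \<gamma> y a b m n))"
      by (rule sum.swap)
    finally show ?thesis by (simp add: mult_ac)
  qed
  have a1: "V r s m n = - V s r m n" for r s m n
  proof -
    have "W s r m n = (\<Sum>a\<in>UNIV. \<Sum>b\<in>UNIV. minv (\<gamma> y) s a * minv (\<gamma> y) r b * riemann_low sp_basis \<gamma> y a b m n)"
      by (rule W2)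
    also have "\<dots> = (\<Sum>b\<in>UNIV. \<Sum>a\<in>UNIV. minv (\<gamma> y) s a * minv (\<gamma> y) r b * riemann_low sp_basis \<gamma> y a b m n)"
      by (rule sum.swap)
    also have "\<dots> = - W r s m n"
    proof -
      have e: "minv (\<gamma> y) s a * minv (\<gamma> y) r b * riemann_low sp_basis \<gamma> y a b m n
          = - (minv (\<gamma> y) r b * minv (\<gamma> y) s a * riemann_low sp_basis \<gamma> y b a m n)" for a b
        using riemann_low_antisym[OF y, of a b m n] by simp
      show ?thesis unfolding W2 e by (simp add: sum_negf)
    qed
    finally show ?thesis by (simp add: V_def algebra_simps)
  qed
  have a2: "V r s m n = - V r s n m" for r s m n
    by (simp add: V_def W_def riemann_antisym_mn[of sp_basis \<gamma> y r _ m n] sum_negf algebra_simps)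
  have tr: "(\<Sum>r\<in>UNIV. V r s r n) = 0" for s n
  proof -
    have "(\<Sum>r\<in>UNIV. W r s r n) = (\<Sum>b\<in>UNIV. minv (\<gamma> y) s b * ricci sp_basis \<gamma> y b n)"
    proof -
      have "(\<Sum>r\<in>UNIV. W r s r n) = (\<Sum>r\<in>UNIV. \<Sum>b\<in>UNIV. minv (\<gamma> y) s b * riemann sp_basis \<gamma> y r b r n)"
        unfolding W_def ..
      also have "\<dots> = (\<Sum>b\<in>UNIV. \<Sum>r\<in>UNIV. minv (\<gamma> y) s b * riemann sp_basis \<gamma> y r b r n)" by (rule sum.swap)
      finally show ?thesis unfolding ricci_def by (simp add: sum_distrib_left)
    qed
    also have "\<dots> = c * kd s n"
    proof -
      have "(\<Sum>b\<in>UNIV. minv (\<gamma> y) s b * \<gamma> y b n) = kd s n" by (rule inv2[OF y])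
      then show ?thesis unfolding ein by (simp add: sum_distrib_left[symmetric] mult_ac)
    qed
    finally have 1: "(\<Sum>r\<in>UNIV. W r s r n) = c * kd s n" .
    have 2: "(\<Sum>r\<in>UNIV. kd r r * kd s n - kd r n * kd s r) = 2 * kd s n"
    proof -
      have "(\<Sum>r\<in>UNIV. kd r r * kd s n - kd r n * kd s r) = (\<Sum>r\<in>(UNIV::'n set). kd s n) - (\<Sum>r\<in>UNIV. kd s r * kd r n)"
        by (simp add: sum_subtractf mult.commute)
      also have "\<dots> = 3 * kd s n - kd s n" using card by simp
      finally show ?thesis by simp
    qed
    have "(\<Sum>r\<in>UNIV. V r s r n) = (\<Sum>r\<in>UNIV. W r s r n) - K * (\<Sum>r\<in>UNIV. kd r r * kd s n - kd r n * kd s r)"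
      unfolding V_def by (simp only: sum_subtractf sum_distrib_left[symmetric])
    then show ?thesis unfolding 1 2 K_def by simp
  qed
  have V0: "V r s m n = 0" for r s m n by (rule three_dim_alg[OF card a1 a2 tr])
  have Wv: "W r s m n = K * (kd r m * kd s n - kd r n * kd s m)" for r s m n
    using V0[of r s m n] by (simp add: V_def)
  have up: "riemann sp_basis \<gamma> y r j m n = K * (kd r m * \<gamma> y j n - kd r n * \<gamma> y j m)" for r j m n
  proof -
    have "riemann sp_basis \<gamma> y r j m n = (\<Sum>s\<in>UNIV. \<gamma> y j s * W r s m n)"
      unfolding W_def by (simp add: sum_swap_mult[symmetric] inv1[OF y])
    also have "\<dots> = K * (kd r m * \<gamma> y j n - kd r n * \<gamma> y j m)"
    proof -
      have "(\<Sum>s\<in>UNIV. \<gamma> y j s * (K * (kd r m * kd s n - kd r n * kd s m)))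
          = (\<Sum>s\<in>UNIV. (K * kd r m) * (\<gamma> y j s * kd s n)) - (\<Sum>s\<in>UNIV. (K * kd r n) * (\<gamma> y j s * kd s m))"
        by (simp add: sum_subtractf[symmetric] algebra_simps)
      also have "\<dots> = K * (kd r m * \<gamma> y j n - kd r n * \<gamma> y j m)"
        by (simp add: sum_distrib_left[symmetric] algebra_simps)
      finally show ?thesis unfolding Wv .
    qed
    finally show ?thesis .
  qed
  show ?thesis
  proof -
    have "riemann_low sp_basis \<gamma> y i j k l = (\<Sum>r\<in>UNIV. \<gamma> y i r * (K * (kd r k * \<gamma> y j l - kd r l * \<gamma> y j k)))"
      unfolding riemann_low_def up ..
    also have "\<dots> = (\<Sum>r\<in>UNIV. (K * \<gamma> y j l) * (\<gamma> y i r * kd r k)) - (\<Sum>r\<in>UNIV. (K * \<gamma> y j k) * (\<gamma> y i r * kd r l))"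
      by (simp add: sum_subtractf[symmetric] algebra_simps)
    also have "\<dots> = K * (\<gamma> y i k * \<gamma> y j l - \<gamma> y i l * \<gamma> y j k)"
      by (simp add: sum_distrib_left[symmetric] algebra_simps)
    finally show ?thesis by (simp add: K_def)
  qed
qed

end

context cone_setting begin

lemma Nt_indep: assumes "t \<in> I" "x \<in> U" "y \<in> U"
  shows "partial st_basis None N (t, y) = partial st_basis None N (t, x)"
proof -
  have "eventually (\<lambda>s. t + s *\<^sub>R 1 \<in> I) (nhds 0)"
    by (rule eventually_line_in_open[OF I_open assms(1)])
  then have "eventually (\<lambda>s. N (t + s, y) = N (t + s, x)) (nhds 0)"
    by (rule eventually_mono) (use N_indep[of _ y x] assms in simp)
  then show ?thesis unfolding partial_def by (simp add: deriv_cong_nhds)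
qed

lemma dC_i00: "p \<in> S \<Longrightarrow> partial st_basis m (\<lambda>q. \<Gamma> q (Some i) None None) p = 0"
  by (rule partial_const_local[OF S_open]) (auto simp: Ck00)
lemma dC_0i0: "p \<in> S \<Longrightarrow> partial st_basis m (\<lambda>q. \<Gamma> q None (Some i) None) p = 0"
  by (rule partial_const_local[OF S_open]) (auto simp: C0j0)
lemma dC_00i: "p \<in> S \<Longrightarrow> partial st_basis m (\<lambda>q. \<Gamma> q None None (Some i)) p = 0"
  by (rule partial_const_local[OF S_open]) (auto simp: C00j)

lemma dC_ki0: assumes p: "p \<in> S"
  shows "partial st_basis m (\<lambda>q. \<Gamma> q (Some k) (Some i) None) p = kd k i * dbeta p m"
proof (rule partial_DERIV_local[OF S_open p])
  show "\<And>q. q \<in> S \<Longrightarrow> \<Gamma> q (Some k) (Some i) None = kd k i * beta q"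
    by (simp add: Cki0 mult.commute)
  show "DERIV (\<lambda>s. kd k i * beta (p + s *\<^sub>R st_basis m)) 0 :> kd k i * dbeta p m"
    by (rule DERIV_cmult[OF beta_DERIV[OF p]])
qed
lemma dC_k0i: assumes p: "p \<in> S"
  shows "partial st_basis m (\<lambda>q. \<Gamma> q (Some k) None (Some i)) p = kd k i * dbeta p m"
proof (rule partial_DERIV_local[OF S_open p])
  show "\<And>q. q \<in> S \<Longrightarrow> \<Gamma> q (Some k) None (Some i) = kd k i * beta q"
    by (simp add: Ck0i mult.commute)
  show "DERIV (\<lambda>s. kd k i * beta (p + s *\<^sub>R st_basis m)) 0 :> kd k i * dbeta p m"
    by (rule DERIV_cmult[OF beta_DERIV[OF p]])
qed

lemma dC_000_sp: assumes p: "p \<in> S"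
  shows "partial st_basis (Some i) (\<lambda>q. \<Gamma> q None None None) p = 0"
proof -
  obtain t x where px: "p = (t, x)" "t \<in> I" "x \<in> U" using p by auto
  define h :: "real \<times> (real ^ 'n) \<Rightarrow> real" where "h q = partial st_basis None N (fst q, x) / N (fst q, x)" for q
  show ?thesis
  proof (rule partial_DERIV_local[OF S_open p])
    fix q assume q: "q \<in> S"
    then obtain t' y where qy: "q = (t', y)" "t' \<in> I" "y \<in> U" by auto
    show "\<Gamma> q None None None = h q"
      using q qy px by (simp add: C000 h_def Nt_indep[of t' x y] N_indep[of t' y x])
  next
    show "DERIV (\<lambda>s. h (p + s *\<^sub>R st_basis (Some i))) 0 :> 0"
      by (simp add: px h_def)
  qed
qed

lemma R00: assumes p: "p \<in> S"
  shows "ricci st_basis G p None None = real CARD('n) * (- dbeta p None + beta p * partial st_basis None N p / N p - (beta p)\<^sup>2)"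
proof -
  have a: "riemann st_basis G p None None None None = 0" by (simp add: riem_expand)
  have b: "riemann st_basis G p (Some i) None (Some i) None = - dbeta p None + beta p * partial st_basis None N p / N p - (beta p)\<^sup>2" for i
    using p by (simp add: riem_expand dC_i00 dC_ki0 Cki0 C000 Ck00 C0j0 Ck0i kd_simps power2_eq_square)
  show ?thesis by (simp add: ricci_def sum_option a b)
qed


lemma R0i: assumes p: "p \<in> S"
  shows "ricci st_basis G p None (Some i) = (1 - real CARD('n)) * dbeta p (Some i)"
proof -
  have a: "riemann st_basis G p None None None (Some i) = 0"
    using p by (simp add: riem_expand dC_0i0 dC_000_sp C0j0 C00j Ck00)
  have b: "riemann st_basis G p (Some j) None (Some j) (Some i) = kd j i * dbeta p (Some j) - dbeta p (Some i)" for j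
  proof -
    have "riemann st_basis G p (Some j) None (Some j) (Some i) = kd j i * dbeta p (Some j) - dbeta p (Some i)
       + beta p * (\<Gamma> p (Some j) (Some j) (Some i) - \<Gamma> p (Some j) (Some i) (Some j))"
      using p by (simp add: riem_expand dC_ki0 Cki0 C0j0 kd_simps sum_subtractf algebra_simps)
    then show ?thesis using chr_sym[OF p, of "Some j" "Some j" "Some i"] by simp
  qed
  have "ricci st_basis G p None (Some i) = (\<Sum>j\<in>UNIV. kd j i * dbeta p (Some j) - dbeta p (Some i))"
    by (simp add: ricci_def sum_option a b)
  also have "\<dots> = dbeta p (Some i) - real CARD('n) * dbeta p (Some i)"
    by (simp add: sum_subtractf)
  finally show ?thesis by (simp add: algebra_simps)
qed

lemma dbeta_sp: assumes p: "p \<in> S" shows "dbeta p (Some i) = 0"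
proof -
  have "(1 - real CARD('n)) * dbeta p (Some i) = 0" using R0i[OF p] vacuum p by simp
  moreover have "1 - real CARD('n) \<noteq> 0" using dim by simp
  ultimately show ?thesis by simp
qed

lemma dtbeta: assumes p: "p \<in> S"
  shows "dbeta p None = beta p * partial st_basis None N p / N p - (beta p)\<^sup>2"
proof -
  have "real CARD('n) * (- dbeta p None + beta p * partial st_basis None N p / N p - (beta p)\<^sup>2) = 0"
    using R00[OF p] vacuum p by simp
  then show ?thesis by simp
qed

lemma beta_indep: assumes "t \<in> I" "x \<in> U" "y \<in> U" shows "beta (t, x) = beta (t, y)"
proof (rule conn_const[OF U_open U_conn _ assms(2,3), of "\<lambda>x. beta (t, x)"])
  fix w i assume w: "w \<in> U"
  have "DERIV (\<lambda>s. beta ((t, w) + s *\<^sub>R st_basis (Some i))) 0 :> dbeta (t, w) (Some i)"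
    by (rule beta_DERIV) (use w assms in auto)
  then show "DERIV (\<lambda>s. beta (t, w + s *\<^sub>R axis i 1)) 0 :> 0"
    using dbeta_sp[of "(t, w)" i] w assms by simp
qed

end

context cone_setting begin

definition "x0 = (SOME x. x \<in> U)"
definition "t0 = (SOME t. t \<in> I)"
lemma x0: "x0 \<in> U" using U_ne by (simp add: x0_def some_in_eq)
lemma t0: "t0 \<in> I" using I_ne by (simp add: t0_def some_in_eq)

definition "bb t = beta (t, x0)"
definition "n0 t = N (t, x0)"
definition "n0' t = partial st_basis None N (t, x0)"

lemma bb_DERIV: "t \<in> I \<Longrightarrow> DERIV bb t :> dbeta (t, x0) None"
proof -
  assume t: "t \<in> I"
  have e: "bb = (\<lambda>u. beta (u, x0))" by (simp add: fun_eq_iff bb_def)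
  show ?thesis using beta_DERIV[of "(t, x0)" None] x0 t by (simp add: e DERIV_time_iff)
qed

lemma n0_DERIV: "t \<in> I \<Longrightarrow> DERIV n0 t :> n0' t"
proof -
  assume t: "t \<in> I"
  have e: "n0 = (\<lambda>u. N (u, x0))" by (simp add: fun_eq_iff n0_def)
  show ?thesis using smooth_DERIV0[OF N_smooth, of "(t, x0)" None] x0 t by (simp add: e n0'_def DERIV_time_iff)
qed

lemma n0_pos: "t \<in> I \<Longrightarrow> n0 t > 0" using Npos x0 by (simp add: n0_def)

lemma bb_ode: "t \<in> I \<Longrightarrow> dbeta (t, x0) None = bb t * n0' t / n0 t - (bb t)\<^sup>2"
  using dtbeta[of "(t, x0)"] x0 by (simp add: bb_def n0_def n0'_def)

lemma n0'_cont: "continuous_on I n0'"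
proof -
  have c: "continuous_on S (iter_partial st_basis [None] N)" by (rule smooth_cont[OF N_smooth])
  have "continuous_on I ((iter_partial st_basis [None] N) \<circ> (\<lambda>t. (t, x0)))"
  proof (rule continuous_on_compose)
    show "continuous_on I (\<lambda>t. (t, x0))" by (intro continuous_intros)
    show "continuous_on ((\<lambda>t. (t, x0)) ` I) (iter_partial st_basis [None] N)"
      by (rule continuous_on_subset[OF c]) (use x0 in auto)
  qed
  then show ?thesis by (simp add: n0'_def o_def)
qed

lemma bb_cont: "continuous_on I bb"
proof (rule continuous_at_imp_continuous_on, intro ballI)
  fix t assume "t \<in> I" then show "isCont bb t" by (rule DERIV_isCont[OF bb_DERIV])
qed
lemma n0_cont: "continuous_on I n0"
proof (rule continuous_at_imp_continuous_on, intro ballI)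
  fix t assume "t \<in> I" then show "isCont n0 t" by (rule DERIV_isCont[OF n0_DERIV])
qed

lemma bb_zero_local:
  assumes ts: "ts \<in> I" and z: "bb ts = 0"
  obtains r where "r > 0" "\<forall>t. \<bar>t - ts\<bar> < r \<longrightarrow> t \<in> I \<and> bb t = 0"
proof -
  obtain r where r: "r > 0" "ball ts r \<subseteq> I" using I_open ts open_contains_ball by blast
  define a c where "a = ts - r/2" and "c = ts + r/2"
  have ac: "{a..c} \<subseteq> I"
  proof
    fix x assume "x \<in> {a..c}"
    then have "x \<in> ball ts r" using r by (auto simp: a_def c_def dist_real_def)
    then show "x \<in> I" using r by blast
  qed
  define k where "k t = n0' t / n0 t - bb t" for t
  have n0ne: "\<forall>t\<in>{a..c}. n0 t \<noteq> 0" using ac n0_pos by fastforce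
  have kc: "continuous_on {a..c} k"
    unfolding k_def using ac n0ne
    by (intro continuous_intros continuous_on_subset[OF n0'_cont] continuous_on_subset[OF n0_cont]
        continuous_on_subset[OF bb_cont]) auto
  obtain F where F: "\<And>t. t \<in> {a..c} \<Longrightarrow> (F has_vector_derivative k t) (at t within {a..c})"
    using antiderivative_continuous[OF kc] by blast
  define w where "w t = bb t * exp (- F t)" for t
  have "\<exists>C. \<forall>t\<in>{a..c}. w t = C"
  proof (rule has_field_derivative_zero_constant)
    fix t assume t: "t \<in> {a..c}"
    then have tI: "t \<in> I" using ac by auto
    have dF: "(F has_real_derivative k t) (at t within {a..c})"
      using F[OF t] by (simp add: has_real_derivative_iff_has_vector_derivative)
    have db: "(bb has_real_derivative dbeta (t, x0) None) (at t within {a..c})"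
      using bb_DERIV[OF tI] by (rule has_field_derivative_at_within)
    have de: "((\<lambda>t. exp (- F t)) has_real_derivative exp (- F t) * (- k t)) (at t within {a..c})"
      using DERIV_chain2[OF DERIV_exp DERIV_minus[OF dF]] by simp
    have "(w has_real_derivative dbeta (t, x0) None * exp (- F t) + exp (- F t) * (- k t) * bb t) (at t within {a..c})"
      unfolding w_def by (rule DERIV_mult[OF db de])
    moreover have "dbeta (t, x0) None * exp (- F t) + exp (- F t) * (- k t) * bb t = 0"
      unfolding bb_ode[OF tI] k_def using n0_pos[OF tI] by (simp add: field_simps power2_eq_square)
    ultimately show "(w has_real_derivative 0) (at t within {a..c})" by simp
  qed simp
  then obtain C where C: "\<forall>t\<in>{a..c}. w t = C" by blast
  have "ts \<in> {a..c}" using r by (simp add: a_def c_def)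
  then have "C = 0" using C z by (auto simp: w_def)
  have "\<forall>t. \<bar>t - ts\<bar> < r/2 \<longrightarrow> t \<in> I \<and> bb t = 0"
  proof (intro allI impI)
    fix t assume "\<bar>t - ts\<bar> < r/2"
    then have t: "t \<in> {a..c}" unfolding a_def c_def atLeastAtMost_iff by linarith
    then have "w t = 0" using C \<open>C = 0\<close> by auto
    then show "t \<in> I \<and> bb t = 0" using t ac by (auto simp: w_def)
  qed
  then show ?thesis using that[of "r/2"] r by auto
qed

lemma tau_eq: assumes p: "p \<in> S" shows "\<tau> p = beta p / N p"
  using beta_eq[OF p] Npos[OF p] by simp

lemma bb_beta: "t \<in> I \<Longrightarrow> x \<in> U \<Longrightarrow> beta (t, x) = bb t"
  using beta_indep[of t x x0] x0 by (simp add: bb_def)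
lemma n0_N: "t \<in> I \<Longrightarrow> x \<in> U \<Longrightarrow> N (t, x) = n0 t"
  using N_indep[of t x x0] x0 by (simp add: n0_def)

lemma bb_nonzero: assumes t: "t \<in> I" shows "bb t \<noteq> 0"
proof -
  obtain p where p: "p \<in> S" "\<tau> p \<noteq> 0" using not_totally_geodesic by blast
  obtain t1 x1 where "p = (t1, x1)" "t1 \<in> I" "x1 \<in> U" using p by auto
  then have t1: "t1 \<in> I" "bb t1 \<noteq> 0" using p tau_eq[of p] bb_beta[of t1 x1] by auto
  have "(bb t = 0) = (bb t1 = 0)"
  proof (rule connected_local_const[of I t t1 "\<lambda>t. bb t = 0"])
    show "connected I" using I_interval by (rule is_interval_connected)
    show "t \<in> I" "t1 \<in> I" using t t1 by auto
    show "\<forall>a\<in>I. \<forall>\<^sub>F b in at a within I. (bb a = 0) = (bb b = 0)"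
    proof
      fix a assume a: "a \<in> I"
      show "\<forall>\<^sub>F b in at a within I. (bb a = 0) = (bb b = 0)"
      proof (cases "bb a = 0")
        case True
        then obtain r where r: "r > 0" "\<forall>t. \<bar>t - a\<bar> < r \<longrightarrow> t \<in> I \<and> bb t = 0"
          using bb_zero_local a by blast
        then show ?thesis unfolding eventually_at using True
          by (intro exI[of _ r]) (auto simp: dist_real_def)
      next
        case False
        have "isCont bb a" by (rule DERIV_isCont[OF bb_DERIV[OF a]])
        then have "eventually (\<lambda>b. bb b \<noteq> 0) (at a)"
          using False by (simp add: isCont_def tendsto_imp_eventually_ne)
        then have "eventually (\<lambda>b. bb b \<noteq> 0) (at a within I)"
          by (rule filter_leD[OF at_le[of I UNIV a], simplified])
        then show ?thesis by (rule eventually_mono) (use False in auto)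
      qed
    qed
  qed
  then show ?thesis using t1 by simp
qed


definition "phi t = n0 t / bb t"

lemma phi_nz: assumes t: "t \<in> I" shows "phi t \<noteq> 0"
  using n0_pos[OF t] bb_nonzero[OF t] by (simp add: phi_def)

lemma bb_phi: "t \<in> I \<Longrightarrow> bb t * phi t = n0 t"
  using bb_nonzero by (simp add: phi_def)

lemma phi_DERIV: assumes t: "t \<in> I" shows "DERIV phi t :> n0 t"
proof -
  have "DERIV (\<lambda>t. n0 t / bb t) t :> (n0' t * bb t - n0 t * dbeta (t, x0) None) / (bb t * bb t)"
    by (rule DERIV_divide[OF n0_DERIV[OF t] bb_DERIV[OF t] bb_nonzero[OF t]])
  moreover have "(n0' t * bb t - n0 t * dbeta (t, x0) None) / (bb t * bb t) = n0 t"
    unfolding bb_ode[OF t] using n0_pos[OF t] bb_nonzero[OF t] by (simp add: field_simps power2_eq_square)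
  ultimately show ?thesis by (simp add: phi_def[abs_def])
qed

definition "\<gamma>0 x i j = g (t0, x) i j / (phi t0)\<^sup>2"

lemma g_DERIV_t: assumes "t \<in> I" "x \<in> U"
  shows "DERIV (\<lambda>u. g (u, x) i j) t :> 2 * bb t * g (t, x) i j"
proof -
  have "DERIV (\<lambda>s. g ((t, x) + s *\<^sub>R st_basis None) i j) 0 :> partial st_basis None (\<lambda>q. g q i j) (t, x)"
    by (rule smooth_DERIV0[OF g_smooth]) (use assms in auto)
  then show ?thesis using assms DERIV_time_iff[of "\<lambda>p. g p i j" t x] by (simp add: dtg' bb_beta)
qed

lemma g_cone: assumes t: "t \<in> I" and x: "x \<in> U"
  shows "g (t, x) i j = (phi t)\<^sup>2 * \<gamma>0 x i j"
proof -
  define \<psi> where "\<psi> u = g (u, x) i j / (phi u)\<^sup>2" for u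
  have "\<exists>C. \<forall>u\<in>I. \<psi> u = C"
  proof (rule has_field_derivative_zero_constant)
    show "convex I" using I_interval by (rule is_interval_convex)
    fix u assume u: "u \<in> I"
    have dp: "DERIV (\<lambda>u. (phi u)\<^sup>2) u :> 2 * phi u * n0 u"
      using DERIV_mult[OF phi_DERIV[OF u] phi_DERIV[OF u]] by (simp add: power2_eq_square algebra_simps)
    have "DERIV \<psi> u :> (2 * bb u * g (u, x) i j * (phi u)\<^sup>2 - g (u, x) i j * (2 * phi u * n0 u)) / ((phi u)\<^sup>2 * (phi u)\<^sup>2)"
      unfolding \<psi>_def[abs_def] by (rule DERIV_divide[OF g_DERIV_t[OF u x] dp]) (use phi_nz[OF u] in simp)
    moreover have "2 * bb u * g (u, x) i j * (phi u)\<^sup>2 - g (u, x) i j * (2 * phi u * n0 u) = 0"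
      using bb_phi[OF u] by (simp add: power2_eq_square algebra_simps)
    ultimately show "(\<psi> has_real_derivative 0) (at u within I)"
      by (simp add: has_field_derivative_at_within)
  qed
  then obtain C where "\<forall>u\<in>I. \<psi> u = C" by blast
  then have "\<psi> t = \<psi> t0" using t t0 by simp
  then show ?thesis using phi_nz[OF t] phi_nz[OF t0] by (simp add: \<psi>_def \<gamma>0_def field_simps)
qed

end

context cone_setting begin

definition "cc = 1 / (phi t0)\<^sup>2"
lemma cc_pos: "cc > 0" using phi_nz[OF t0] by (simp add: cc_def)
lemma \<gamma>0_cc: "\<gamma>0 x i j = cc * g (t0, x) i j" by (simp add: \<gamma>0_def cc_def)

lemma \<gamma>0_iter:
  assumes "x \<in> U"
  shows "iter_partial sp_basis ms (\<lambda>x. \<gamma>0 x a b) x = cc * iter_partial st_basis (map Some ms) (\<lambda>q. g q a b) (t0, x)"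
  using assms
proof (induction ms arbitrary: x)
  case Nil
  then show ?case by (simp add: \<gamma>0_cc)
next
  case (Cons m ms)
  have ev: "eventually (\<lambda>s. x + s *\<^sub>R sp_basis m \<in> U) (nhds 0)"
    by (rule eventually_line_in_open[OF U_open Cons.prems])
  have "eventually (\<lambda>s. iter_partial sp_basis ms (\<lambda>x. \<gamma>0 x a b) (x + s *\<^sub>R sp_basis m)
       = cc * iter_partial st_basis (map Some ms) (\<lambda>q. g q a b) ((t0, x) + s *\<^sub>R st_basis (Some m))) (nhds 0)"
    by (rule eventually_mono[OF ev]) (simp add: Cons.IH)
  then have "partial sp_basis m (iter_partial sp_basis ms (\<lambda>x. \<gamma>0 x a b)) x
      = deriv (\<lambda>s. cc * iter_partial st_basis (map Some ms) (\<lambda>q. g q a b) ((t0, x) + s *\<^sub>R st_basis (Some m))) 0"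
    unfolding partial_def by (rule deriv_cong_nhds)
  also have "\<dots> = cc * iter_partial st_basis (Some m # map Some ms) (\<lambda>q. g q a b) (t0, x)"
    by (rule DERIV_imp_deriv[OF DERIV_cmult[OF smooth_DERIV[OF g_smooth]]]) (use Cons.prems t0 in auto)
  finally show ?case by simp
qed

lemma \<gamma>0_iter_DERIV:
  assumes x: "x \<in> U"
  shows "DERIV (\<lambda>s. iter_partial sp_basis ms (\<lambda>x. \<gamma>0 x a b) (x + s *\<^sub>R sp_basis m)) 0 :>
     cc * iter_partial st_basis (Some m # map Some ms) (\<lambda>q. g q a b) (t0, x)"
proof -
  have ev: "eventually (\<lambda>s. x + s *\<^sub>R sp_basis m \<in> U) (nhds 0)"
    by (rule eventually_line_in_open[OF U_open x])
  have ev2: "eventually (\<lambda>s. iter_partial sp_basis ms (\<lambda>x. \<gamma>0 x a b) (x + s *\<^sub>R sp_basis m)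
       = cc * iter_partial st_basis (map Some ms) (\<lambda>q. g q a b) ((t0, x) + s *\<^sub>R st_basis (Some m))) (nhds 0)"
    by (rule eventually_mono[OF ev]) (simp add: \<gamma>0_iter)
  have d:  "DERIV (\<lambda>s. cc * iter_partial st_basis (map Some ms) (\<lambda>q. g q a b) ((t0, x) + s *\<^sub>R st_basis (Some m))) 0 :>
     cc * iter_partial st_basis (Some m # map Some ms) (\<lambda>q. g q a b) (t0, x)"
    by (rule DERIV_cmult[OF smooth_DERIV[OF g_smooth]]) (use x t0 in auto)
  show ?thesis by (rule iffD2[OF DERIV_cong_ev[OF refl ev2 refl] d])
qed

lemma \<gamma>0_smooth: "smooth_on sp_basis U (\<lambda>x. \<gamma>0 x a b)"
  unfolding smooth_on_def
proof (intro allI conjI ballI)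
  fix ms
  have c: "continuous_on S (iter_partial st_basis (map Some ms) (\<lambda>q. g q a b))"
    by (rule smooth_cont[OF g_smooth])
  have "continuous_on U (\<lambda>x. cc * iter_partial st_basis (map Some ms) (\<lambda>q. g q a b) (t0, x))"
  proof (intro continuous_intros)
    have "continuous_on U ((iter_partial st_basis (map Some ms) (\<lambda>q. g q a b)) \<circ> (\<lambda>x. (t0, x)))"
    proof (rule continuous_on_compose)
      show "continuous_on U (\<lambda>x. (t0, x))" by (intro continuous_intros)
      show "continuous_on ((\<lambda>x. (t0, x)) ` U) (iter_partial st_basis (map Some ms) (\<lambda>q. g q a b))"
        by (rule continuous_on_subset[OF c]) (use t0 in auto)
    qed
    then show "continuous_on U (\<lambda>x. iter_partial st_basis (map Some ms) (\<lambda>q. g q a b) (t0, x))"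
      by (simp add: o_def)
  qed
  then show "continuous_on U (iter_partial sp_basis ms (\<lambda>x. \<gamma>0 x a b))"
    by (rule continuous_on_cong[THEN iffD1, OF refl, rotated]) (simp add: \<gamma>0_iter)
  fix m x assume x: "x \<in> U"
  show "(\<lambda>s. iter_partial sp_basis ms (\<lambda>x. \<gamma>0 x a b) (x + s *\<^sub>R sp_basis m)) differentiable (at 0)"
    using \<gamma>0_iter_DERIV[OF x, of ms a b m] unfolding real_differentiable_def by blast
qed

lemma \<gamma>0_riem: "riemannian_metric_on sp_basis U \<gamma>0"
  unfolding riemannian_metric_on_def
proof (intro conjI allI ballI impI)
  fix a b show "smooth_on sp_basis U (\<lambda>x. \<gamma>0 x a b)" by (rule \<gamma>0_smooth)
next
  fix x a b assume "x \<in> U"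
  then show "\<gamma>0 x a b = \<gamma>0 x b a" using g_sym[of "(t0, x)"] t0 by (simp add: \<gamma>0_cc)
next
  fix x and v :: "'n \<Rightarrow> real" assume x: "x \<in> U" and v: "v \<noteq> (\<lambda>_. 0)"
  have "(\<Sum>a\<in>UNIV. \<Sum>b\<in>UNIV. g (t0, x) a b * v a * v b) > 0" using g_pd[of "(t0, x)"] x t0 v by auto
  then have "cc * (\<Sum>a\<in>UNIV. \<Sum>b\<in>UNIV. g (t0, x) a b * v a * v b) > 0" using cc_pos by simp
  then show "(\<Sum>a\<in>UNIV. \<Sum>b\<in>UNIV. \<gamma>0 x a b * v a * v b) > 0"
    by (simp add: \<gamma>0_cc sum_distrib_left mult_ac)
qed


lemma \<gamma>0_pd: "y \<in> U \<Longrightarrow> \<forall>v::'n \<Rightarrow> real. v \<noteq> (\<lambda>_. 0) \<longrightarrow> (\<Sum>a\<in>UNIV. \<Sum>b\<in>UNIV. \<gamma>0 y a b * v a * v b) > 0"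
  using \<gamma>0_riem unfolding riemannian_metric_on_def by blast
lemma \<gamma>0_sym: "y \<in> U \<Longrightarrow> \<gamma>0 y a b = \<gamma>0 y b a"
  using \<gamma>0_riem unfolding riemannian_metric_on_def by blast

lemma ginv_cone: assumes t: "t \<in> I" and y: "y \<in> U"
  shows "minv (g (t, y)) i j = minv (\<gamma>0 y) i j / (phi t)\<^sup>2"
proof (rule minv_unique)
  fix i j
  have "(\<Sum>k\<in>UNIV. g (t, y) i k * (minv (\<gamma>0 y) k j / (phi t)\<^sup>2)) = (\<Sum>k\<in>UNIV. \<gamma>0 y i k * minv (\<gamma>0 y) k j)"
    using phi_nz[OF t] by (simp add: g_cone[OF t y])
  also have "\<dots> = kd i j" by (rule posdef_inverse(1)[OF \<gamma>0_pd[OF y]])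
  finally show "(\<Sum>k\<in>UNIV. g (t, y) i k * (minv (\<gamma>0 y) k j / (phi t)\<^sup>2)) = kd i j" .
qed

lemma dsp_g: assumes t: "t \<in> I" and y: "y \<in> U"
  shows "partial st_basis (Some i) (\<lambda>q. g q l j) (t, y) = (phi t)\<^sup>2 * partial sp_basis i (\<lambda>x. \<gamma>0 x l j) y"
proof (rule partial_DERIV_local[OF S_open, where h="\<lambda>q. (phi (fst q))\<^sup>2 * \<gamma>0 (snd q) l j"])
  show "(t, y) \<in> S" using t y by simp
  show "\<And>q. q \<in> S \<Longrightarrow> g q l j = (phi (fst q))\<^sup>2 * \<gamma>0 (snd q) l j"
    using g_cone by auto
  have "DERIV (\<lambda>s. \<gamma>0 (y + s *\<^sub>R sp_basis i) l j) 0 :> partial sp_basis i (\<lambda>x. \<gamma>0 x l j) y"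
    by (rule smooth_DERIV0[OF \<gamma>0_smooth y])
  then show "DERIV (\<lambda>s. (phi (fst ((t, y) + s *\<^sub>R st_basis (Some i))))\<^sup>2 * \<gamma>0 (snd ((t, y) + s *\<^sub>R st_basis (Some i))) l j) 0 :>
      (phi t)\<^sup>2 * partial sp_basis i (\<lambda>x. \<gamma>0 x l j) y"
    by (simp add: DERIV_cmult)
qed

lemma C_sp: assumes t: "t \<in> I" and y: "y \<in> U"
  shows "\<Gamma> (t, y) (Some k) (Some i) (Some j) = christoffel sp_basis \<gamma>0 y k i j"
proof -
  have "\<Gamma> (t, y) (Some k) (Some i) (Some j) = (1/2) * (\<Sum>l\<in>UNIV. minv (g (t, y)) k l *
     (partial st_basis (Some i) (\<lambda>q. G q (Some l) (Some j)) (t, y) + partial st_basis (Some j) (\<lambda>q. G q (Some l) (Some i)) (t, y)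
      - partial st_basis (Some l) (\<lambda>q. G q (Some i) (Some j)) (t, y)))"
    by (rule chr_Some) (use t y in simp)
  also have "\<dots> = christoffel sp_basis \<gamma>0 y k i j"
    unfolding christoffel_def metric_inv_minv using t y phi_nz[OF t]
    by (simp add: ginv_cone dsp_g algebra_simps)
  finally show ?thesis .
qed

lemma dC_sp_sp: assumes t: "t \<in> I" and y: "y \<in> U"
  shows "partial st_basis (Some m) (\<lambda>q. \<Gamma> q (Some k) (Some i) (Some j)) (t, y)
       = partial sp_basis m (\<lambda>y. christoffel sp_basis \<gamma>0 y k i j) y"
proof -
  have "partial st_basis (Some m) (\<lambda>q. \<Gamma> q (Some k) (Some i) (Some j)) (t, y)
      = partial st_basis (Some m) (\<lambda>q. christoffel sp_basis \<gamma>0 (snd q) k i j) (t, y)"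
    by (rule partial_local[OF S_open]) (use t y C_sp in auto)
  then show ?thesis by (simp add: partial_def)
qed

lemma dC_sp_t: assumes t: "t \<in> I" and y: "y \<in> U"
  shows "partial st_basis None (\<lambda>q. \<Gamma> q (Some k) (Some i) (Some j)) (t, y) = 0"
proof -
  have "partial st_basis None (\<lambda>q. \<Gamma> q (Some k) (Some i) (Some j)) (t, y)
      = partial st_basis None (\<lambda>q. christoffel sp_basis \<gamma>0 (snd q) k i j) (t, y)"
    by (rule partial_local[OF S_open]) (use t y C_sp in auto)
  then show ?thesis by (simp add: partial_def)
qed

lemma bb_eq: "t \<in> I \<Longrightarrow> bb t = n0 t / phi t"
  using phi_nz bb_phi by (simp add: field_simps)

lemma C0ij_cone: assumes t: "t \<in> I" and y: "y \<in> U"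
  shows "\<Gamma> (t, y) None (Some i) (Some j) = phi t / n0 t * \<gamma>0 y i j"
  using t y phi_nz[OF t] n0_pos[OF t]
  by (simp add: C0ij g_cone bb_beta n0_N bb_eq power2_eq_square field_simps)

lemma C000_cone: assumes t: "t \<in> I" and y: "y \<in> U"
  shows "\<Gamma> (t, y) None None None = n0' t / n0 t"
  using t y x0 by (simp add: C000 n0_N n0'_def Nt_indep[of t x0 y])

lemma Ck0i_cone: "t \<in> I \<Longrightarrow> y \<in> U \<Longrightarrow> \<Gamma> (t, y) (Some k) None (Some i) = bb t * kd k i"
  by (simp add: Ck0i bb_beta)
lemma Cki0_cone: "t \<in> I \<Longrightarrow> y \<in> U \<Longrightarrow> \<Gamma> (t, y) (Some k) (Some i) None = bb t * kd k i"
  by (simp add: Cki0 bb_beta)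

lemma dC0ij_t: assumes t: "t \<in> I" and y: "y \<in> U"
  shows "partial st_basis None (\<lambda>q. \<Gamma> q None (Some i) (Some j)) (t, y)
     = \<gamma>0 y i j * ((n0 t)\<^sup>2 - phi t * n0' t) / (n0 t)\<^sup>2"
proof (rule partial_DERIV_local[OF S_open, where h="\<lambda>q. phi (fst q) / n0 (fst q) * \<gamma>0 (snd q) i j"])
  show "(t, y) \<in> S" using t y by simp
  show "\<And>q. q \<in> S \<Longrightarrow> \<Gamma> q None (Some i) (Some j) = phi (fst q) / n0 (fst q) * \<gamma>0 (snd q) i j"
    using C0ij_cone by auto
  have "DERIV (\<lambda>u. phi u / n0 u) t :> (n0 t * n0 t - phi t * n0' t) / (n0 t * n0 t)"
    using DERIV_divide[OF phi_DERIV[OF t] n0_DERIV[OF t]] n0_pos[OF t] by simp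
  then have "DERIV (\<lambda>u. phi u / n0 u * \<gamma>0 y i j) t :> (n0 t * n0 t - phi t * n0' t) / (n0 t * n0 t) * \<gamma>0 y i j"
    by (rule DERIV_cmult_right)
  then show "DERIV (\<lambda>s. phi (fst ((t, y) + s *\<^sub>R st_basis None)) / n0 (fst ((t, y) + s *\<^sub>R st_basis None)) * \<gamma>0 (snd ((t, y) + s *\<^sub>R st_basis None)) i j) 0 :>
     \<gamma>0 y i j * ((n0 t)\<^sup>2 - phi t * n0' t) / (n0 t)\<^sup>2"
    using DERIV_time_iff[of "\<lambda>q. phi (fst q) / n0 (fst q) * \<gamma>0 (snd q) i j" t y]
    by (simp add: power2_eq_square mult_ac)
qed


lemma bb_phi_n0: "t \<in> I \<Longrightarrow> bb t * (phi t / n0 t) = 1"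
  using bb_phi n0_pos by (metis less_irrefl times_divide_eq_right divide_self)

lemma Rij_cone: assumes t: "t \<in> I" and y: "y \<in> U"
  shows "ricci st_basis G (t, y) (Some i) (Some j) = ricci sp_basis \<gamma>0 y i j + (real CARD('n) - 1) * \<gamma>0 y i j"
proof -
  have ty: "(t, y) \<in> S" using t y by simp
  have a: "riemann st_basis G (t, y) None (Some i) None (Some j) = 0"
  proof -
    have "riemann st_basis G (t, y) None (Some i) None (Some j) =
        \<gamma>0 y j i * ((n0 t)\<^sup>2 - phi t * n0' t) / (n0 t)\<^sup>2 + n0' t / n0 t * (phi t / n0 t * \<gamma>0 y j i)
        - phi t / n0 t * \<gamma>0 y j i * bb t"
      using t y ty by (simp add: riem_expand dC0ij_t dC_00i C000_cone C0ij_cone C0j0 C00j Ck0i_cone kd_simps)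
    also have "\<dots> = 0" using n0_pos[OF t] phi_nz[OF t] by (simp add: bb_eq[OF t] field_simps power2_eq_square)
    finally show ?thesis .
  qed
  have b: "riemann st_basis G (t, y) (Some k) (Some i) (Some k) (Some j) =
      riemann sp_basis \<gamma>0 y k i k j + \<gamma>0 y j i - kd k j * \<gamma>0 y k i" for k
  proof -
    have "riemann st_basis G (t, y) (Some k) (Some i) (Some k) (Some j) =
      riemann sp_basis \<gamma>0 y k i k j + bb t * (phi t / n0 t) * \<gamma>0 y j i - kd k j * (bb t * (phi t / n0 t)) * \<gamma>0 y k i"
      using t y ty by (simp add: riem_expand riemann_def[of sp_basis] sum_option dC_sp_sp C_sp Cki0_cone C0ij_cone kd_simps algebra_simps)
    then show ?thesis by (simp only: bb_phi_n0[OF t] mult_1_left mult_1_right)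
  qed
  have "ricci st_basis G (t, y) (Some i) (Some j) = (\<Sum>k\<in>UNIV. riemann sp_basis \<gamma>0 y k i k j + \<gamma>0 y j i - kd k j * \<gamma>0 y k i)"
    by (simp add: ricci_def sum_option a b)
  also have "\<dots> = ricci sp_basis \<gamma>0 y i j + real CARD('n) * \<gamma>0 y j i - \<gamma>0 y j i"
    by (simp add: ricci_def sum.distrib sum_subtractf)
  finally show ?thesis using \<gamma>0_sym[OF y, of i j] by (simp add: algebra_simps)
qed

lemma ricci_\<gamma>0: assumes y: "y \<in> U"
  shows "ricci sp_basis \<gamma>0 y i j = - (real CARD('n) - 1) * \<gamma>0 y i j"
proof -
  have "ricci sp_basis \<gamma>0 y i j + (real CARD('n) - 1) * \<gamma>0 y i j = 0"
    using Rij_cone[OF t0 y, of i j] vacuum t0 y by simp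
  then have "ricci sp_basis \<gamma>0 y i j = - ((real CARD('n) - 1) * \<gamma>0 y i j)"
    by (simp add: eq_neg_iff_add_eq_0)
  then show ?thesis by (simp add: algebra_simps)
qed

end

sublocale cone_setting \<subseteq> sp: sp_metric U \<gamma>0
  by unfold_locales (rule U_open, rule \<gamma>0_riem)

context cone_setting begin

lemma const_curv:
  assumes card: "CARD('n) = 3" and y: "y \<in> U"
  shows "riemann_low sp_basis \<gamma>0 y i j k l = - 1 * (\<gamma>0 y i k * \<gamma>0 y j l - \<gamma>0 y i l * \<gamma>0 y j k)"
proof -
  have "riemann_low sp_basis \<gamma>0 y i j k l = (- (real CARD('n) - 1) / 2) * (\<gamma>0 y i k * \<gamma>0 y j l - \<gamma>0 y i l * \<gamma>0 y j k)"
    by (rule sp.einstein_3d[OF card _ y]) (rule ricci_\<gamma>0[OF y])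
  then show ?thesis using card by simp
qed

lemma const_curv_up:
  assumes card: "CARD('n) = 3" and y: "y \<in> U"
  shows "riemann sp_basis \<gamma>0 y r j m n = - (kd r m * \<gamma>0 y j n - kd r n * \<gamma>0 y j m)"
proof -
  have "riemann sp_basis \<gamma>0 y r j m n = (\<Sum>a\<in>UNIV. minv (\<gamma>0 y) r a * (- 1 * (\<gamma>0 y a m * \<gamma>0 y j n - \<gamma>0 y a n * \<gamma>0 y j m)))"
    unfolding sp.upper_from_low[OF y] const_curv[OF card y] ..
  also have "\<dots> = (\<Sum>a\<in>UNIV. (minv (\<gamma>0 y) r a * \<gamma>0 y a m) * (- \<gamma>0 y j n) + (minv (\<gamma>0 y) r a * \<gamma>0 y a n) * \<gamma>0 y j m)"
    by (rule sum.cong) (simp_all add: algebra_simps)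
  also have "\<dots> = (\<Sum>a\<in>UNIV. minv (\<gamma>0 y) r a * \<gamma>0 y a m) * (- \<gamma>0 y j n) + (\<Sum>a\<in>UNIV. minv (\<gamma>0 y) r a * \<gamma>0 y a n) * \<gamma>0 y j m"
    by (simp only: sum.distrib sum_distrib_right)
  also have "\<dots> = - (kd r m * \<gamma>0 y j n - kd r n * \<gamma>0 y j m)" by (simp add: sp.inv2[OF y])
  finally show ?thesis .
qed

lemma dC0ij_sp: assumes t: "t \<in> I" and y: "y \<in> U"
  shows "partial st_basis (Some k) (\<lambda>q. \<Gamma> q None (Some i) (Some j)) (t, y) = phi t / n0 t * sp.P k i j y"
proof (rule partial_DERIV_local[OF S_open, where h="\<lambda>q. phi (fst q) / n0 (fst q) * \<gamma>0 (snd q) i j"])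
  show "(t, y) \<in> S" using t y by simp
  show "\<And>q. q \<in> S \<Longrightarrow> \<Gamma> q None (Some i) (Some j) = phi (fst q) / n0 (fst q) * \<gamma>0 (snd q) i j"
    using C0ij_cone by auto
  show "DERIV (\<lambda>s. phi (fst ((t, y) + s *\<^sub>R st_basis (Some k))) / n0 (fst ((t, y) + s *\<^sub>R st_basis (Some k))) *
      \<gamma>0 (snd ((t, y) + s *\<^sub>R st_basis (Some k))) i j) 0 :> phi t / n0 t * sp.P k i j y"
    using DERIV_cmult[OF sp.dg[OF y, where m=k and a=i and b=j], of "phi t / n0 t"] by simp
qed

lemma dbeta_t_cone: assumes t: "t \<in> I" and y: "y \<in> U"
  shows "dbeta (t, y) None = bb t * n0' t / n0 t - (bb t)\<^sup>2"
  using dtbeta[of "(t, y)"] t y x0 by (simp add: bb_beta n0_N n0'_def Nt_indep[of t x0 y])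

lemma flat_cases:
  assumes card: "CARD('n) = 3" and t: "t \<in> I" and y: "y \<in> U"
  shows "riemann st_basis G (t, y) None None None (Some l) = 0"
    "riemann st_basis G (t, y) None None (Some m) (Some l) = 0"
    "riemann st_basis G (t, y) None (Some i) None (Some l) = 0"
    "riemann st_basis G (t, y) None (Some i) (Some m) (Some l) = 0"
    "riemann st_basis G (t, y) (Some k) None None (Some l) = 0"
    "riemann st_basis G (t, y) (Some k) None (Some m) (Some l) = 0"
    "riemann st_basis G (t, y) (Some k) (Some i) None (Some l) = 0"
    "riemann st_basis G (t, y) (Some k) (Some i) (Some m) (Some l) = 0"
proof -
  have ty: "(t, y) \<in> S" using t y by simp
  have bpn: "bb t * (phi t / n0 t) = 1" by (rule bb_phi_n0[OF t])
  show "riemann st_basis G (t, y) None None None (Some l) = 0"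
    using ty by (simp add: riem_expand dC_0i0 dC_000_sp C0j0 C00j Ck00)
  show "riemann st_basis G (t, y) None None (Some m) (Some l) = 0"
    using t y ty \<gamma>0_sym[OF y, of m l]
    by (simp add: riem_expand dC_0i0 C0j0 C0ij_cone Cki0_cone kd_simps sum_subtractf)
  show "riemann st_basis G (t, y) None (Some i) None (Some l) = 0"
  proof -
    have "riemann st_basis G (t, y) None (Some i) None (Some l) =
        \<gamma>0 y l i * ((n0 t)\<^sup>2 - phi t * n0' t) / (n0 t)\<^sup>2 + n0' t / n0 t * (phi t / n0 t * \<gamma>0 y l i)
        - phi t / n0 t * \<gamma>0 y l i * bb t"
      using t y ty by (simp add: riem_expand dC0ij_t dC_00i C000_cone C0ij_cone C0j0 C00j Ck0i_cone kd_simps)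
    also have "\<dots> = 0" using n0_pos[OF t] phi_nz[OF t] by (simp add: bb_eq[OF t] field_simps power2_eq_square)
    finally show ?thesis .
  qed
  show "riemann st_basis G (t, y) None (Some i) (Some m) (Some l) = 0"
  proof -
    have "riemann st_basis G (t, y) None (Some i) (Some m) (Some l) =
       phi t / n0 t * (sp.P m l i y - sp.P l m i y + sp.G1 y m l i - sp.G1 y l m i)"
      using t y ty by (simp add: riem_expand dC0ij_sp C0j0 C0ij_cone C_sp sp.G1_def sum_subtractf
          sum_distrib_left algebra_simps)
    also have "\<dots> = 0"
      using sp.G1_eq[OF y, of m l i] sp.G1_eq[OF y, of l m i] sp.Psym[OF y, of i m l] by simp
    finally show ?thesis .
  qed
  show "riemann st_basis G (t, y) (Some k) None None (Some l) = 0"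
  proof -
    have "riemann st_basis G (t, y) (Some k) None None (Some l) =
        kd k l * (dbeta (t, y) None - bb t * (n0' t / n0 t) + bb t * bb t)"
      using t y ty by (simp add: riem_expand dC_ki0 dC_i00 Ck00 C0j0 Cki0_cone Ck0i_cone C000_cone kd_simps algebra_simps)
    also have "\<dots> = 0" using n0_pos[OF t] by (simp add: dbeta_t_cone[OF t y] power2_eq_square)
    finally show ?thesis .
  qed
  show "riemann st_basis G (t, y) (Some k) None (Some m) (Some l) = 0"
  proof -
    have "riemann st_basis G (t, y) (Some k) None (Some m) (Some l) =
        bb t * (\<Gamma> (t, y) (Some k) (Some m) (Some l) - \<Gamma> (t, y) (Some k) (Some l) (Some m))"
      using t y ty by (simp add: riem_expand dC_ki0 dbeta_sp C0j0 Cki0_cone kd_simps sum_subtractf algebra_simps)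
    also have "\<dots> = 0" using chr_sym[OF ty, of "Some k" "Some m" "Some l"] by simp
    finally show ?thesis .
  qed
  show "riemann st_basis G (t, y) (Some k) (Some i) None (Some l) = 0"
    using t y ty by (simp add: riem_expand dC_sp_t dC_k0i dbeta_sp Ck00 C00j Cki0_cone Ck0i_cone kd_simps
        sum_subtractf algebra_simps)
  show "riemann st_basis G (t, y) (Some k) (Some i) (Some m) (Some l) = 0"
  proof -
    have "riemann st_basis G (t, y) (Some k) (Some i) (Some m) (Some l) =
      riemann sp_basis \<gamma>0 y k i m l + kd k m * (bb t * (phi t / n0 t)) * \<gamma>0 y l i - kd k l * (bb t * (phi t / n0 t)) * \<gamma>0 y m i"
      using t y ty by (simp add: riem_expand riemann_def[of sp_basis] sum_option dC_sp_sp C_sp Cki0_cone C0ij_cone kd_simps algebra_simps)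
    also have "\<dots> = 0" unfolding bpn const_curv_up[OF card y] using \<gamma>0_sym[OF y, of l i] \<gamma>0_sym[OF y, of m i] by simp
    finally show ?thesis .
  qed
qed

lemma riem_same: "riemann E G' p r s m m = 0"
  by (simp add: riemann_def)

lemma flat:
  assumes card: "CARD('n) = 3" and p: "p \<in> S"
  shows "riemann st_basis G p a b c d = 0"
proof -
  obtain t y where ty: "p = (t, y)" "t \<in> I" "y \<in> U" using p by auto
  have main: "riemann st_basis G p a b c (Some l) = 0" for a b c l
    using flat_cases[OF card ty(2,3)] ty(1) by (cases a; cases b; cases c) auto
  show ?thesis
  proof (cases d)
    case (Some l) then show ?thesis using main by simp
  next
    case None
    show ?thesis
    proof (cases c)
      case None then show ?thesis using \<open>d = None\<close> riem_same by simp
    next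
      case (Some m)
      then show ?thesis using \<open>d = None\<close> main[of a b None m] sp.riemann_antisym_mn[of st_basis G p a b c d] by simp
    qed
  qed
qed

end

theorem theorem2:
  fixes I :: "real set" and U :: "(real ^ 'n) set"
    and N :: "real \<times> (real ^ 'n) \<Rightarrow> real"
    and g :: "real \<times> (real ^ 'n) \<Rightarrow> 'n \<Rightarrow> 'n \<Rightarrow> real"
    and \<tau> :: "real \<times> (real ^ 'n) \<Rightarrow> real"
  assumes dim: "CARD('n) \<ge> 2"
    and I_interval: "is_interval I" and I_open: "open I" and I_ne: "I \<noteq> {}"
    and U_open: "open U" and U_conn: "connected U" and U_ne: "U \<noteq> {}"
    and N_smooth: "smooth_on st_basis (I \<times> U) N"
    and N_pos: "\<forall>p\<in>I \<times> U. N p > 0"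
    and g_riem: "riemannian_metric_on st_basis (I \<times> U) g"
    and umbilic: "\<forall>p\<in>I \<times> U. \<forall>i j. second_fund_form N g p i j = \<tau> p * g p i j"
    and not_totally_geodesic: "\<exists>p\<in>I \<times> U. \<tau> p \<noteq> 0"
    and vacuum: "\<forall>p\<in>I \<times> U. \<forall>a b. ricci st_basis (st_metric N g) p a b = 0"
    and geodesic: "\<forall>p\<in>I \<times> U. \<forall>s. acceleration N g p s = 0"
  shows "\<exists>\<phi> :: real \<Rightarrow> real. \<exists>\<gamma> :: real ^ 'n \<Rightarrow> 'n \<Rightarrow> 'n \<Rightarrow> real. \<exists>c :: real.
           (\<forall>t\<in>I. \<forall>x\<in>U. (\<phi> has_real_derivative N (t, x)) (at t)) \<and>
           riemannian_metric_on sp_basis U \<gamma> \<and>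
           (\<forall>t\<in>I. \<forall>x\<in>U. \<forall>i j. g (t, x) i j = (\<phi> t)\<^sup>2 * \<gamma> x i j) \<and>
           c < 0 \<and>
           (\<forall>x\<in>U. \<forall>i j. ricci sp_basis \<gamma> x i j = c * \<gamma> x i j) \<and>
           (CARD('n) = 3 \<longrightarrow>
              (\<exists>K::real. K < 0 \<and>
                 (\<forall>x\<in>U. \<forall>i j k l. riemann_low sp_basis \<gamma> x i j k l
                     = K * (\<gamma> x i k * \<gamma> x j l - \<gamma> x i l * \<gamma> x j k))) \<and>
              (\<forall>p\<in>I \<times> U. \<forall>a b c d. riemann st_basis (st_metric N g) p a b c d = 0))"
proof -
  interpret c: cone_setting I U N g \<tau>
    by (rule cone_setting.intro) (rule dim I_interval I_open I_ne U_open U_conn U_ne N_smooth N_pos g_riem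
        umbilic not_totally_geodesic vacuum geodesic)+
  show ?thesis
  proof (intro exI[of _ c.phi] exI[of _ c.\<gamma>0] exI[of _ "- (real CARD('n) - 1)"] conjI)
    show "\<forall>t\<in>I. \<forall>x\<in>U. (c.phi has_real_derivative N (t, x)) (at t)"
      using c.phi_DERIV c.n0_N by simp
    show "riemannian_metric_on sp_basis U c.\<gamma>0" by (rule c.\<gamma>0_riem)
    show "\<forall>t\<in>I. \<forall>x\<in>U. \<forall>i j. g (t, x) i j = (c.phi t)\<^sup>2 * c.\<gamma>0 x i j"
      using c.g_cone by simp
    show "- (real CARD('n) - 1) < 0" using dim by simp
    show "\<forall>x\<in>U. \<forall>i j. ricci sp_basis c.\<gamma>0 x i j = - (real CARD('n) - 1) * c.\<gamma>0 x i j"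
      using c.ricci_\<gamma>0 by simp
    show "CARD('n) = 3 \<longrightarrow>
      (\<exists>K<0. \<forall>x\<in>U. \<forall>i j k l. riemann_low sp_basis c.\<gamma>0 x i j k l = K * (c.\<gamma>0 x i k * c.\<gamma>0 x j l - c.\<gamma>0 x i l * c.\<gamma>0 x j k)) \<and>
      (\<forall>p\<in>I \<times> U. \<forall>a b c d. riemann st_basis (st_metric N g) p a b c d = 0)"
    proof
      assume card: "CARD('n) = 3"
      show "(\<exists>K<0. \<forall>x\<in>U. \<forall>i j k l. riemann_low sp_basis c.\<gamma>0 x i j k l = K * (c.\<gamma>0 x i k * c.\<gamma>0 x j l - c.\<gamma>0 x i l * c.\<gamma>0 x j k)) \<and>
        (\<forall>p\<in>I \<times> U. \<forall>a b c d. riemann st_basis (st_metric N g) p a b c d = 0)"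
      proof
        show "\<exists>K<0. \<forall>x\<in>U. \<forall>i j k l. riemann_low sp_basis c.\<gamma>0 x i j k l = K * (c.\<gamma>0 x i k * c.\<gamma>0 x j l - c.\<gamma>0 x i l * c.\<gamma>0 x j k)"
          using c.const_curv[OF card] by (intro exI[of _ "-1"]) simp
        show "\<forall>p\<in>I \<times> U. \<forall>a b c d. riemann st_basis (st_metric N g) p a b c d = 0"
          using c.flat[OF card] by blast
      qed
    qed
  qed
qed


end
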